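(* For $n\ge2$, \[M_n(x)=2\sum_{T\in\widetilde{\mathcal{HR}}_n}x^{\min(T)+1},\] where $M_n(x)=2\sum_{k=1}^{\ell}d_{n,k-1}x^k(1+x)^{\ell-k}$ with $\ell=\lfloor (n+1)/2\rfloor$ (so that $R_n(x)=(1+x)^{\lfloor (n-2)/2\rfloor}M_n(x)$), and $\min(T)$ denotes the number of inner nodes of $T$ that are min-nodes.
   Context: All trees are rooted binary trees in which each child is designated left or right. A min–max tree on a totally ordered label set is such a tree labeled bijectively so that each node's label is the minimum or maximum of the labels of its subtree. A node with at least one child is inner; an inner node is a min-node (resp. max-node) if its label is the minimum (resp. maximum) of its subtree. An HR-tree is a min–max tree in which every inner node $s$ has a nonempty right subtree containing the maximum label of the subtree of $s$ if $s$ is a min-node and the minimum label if $s$ is a max-node (so every node with exactly one child has only a right child). The reading word $w(T)$ is the in-order reading $w(T)=w(L)\,\ell_{\mathrm{root}}\,w(R)$. $\mathcal{HR}_n$ is the set of HR-trees labeled by $[n]$; $w$ is a bijection $\mathcal{HR}_n\to\mathfrak S_n$. For $T\in\mathcal{HR}_n$ with $w(T)=\pi$, list the nodes having exactly one child by increasing position of their labels in $\pi$; the $k$-th in this list is called an odd or even one-child node according to the parity of $k$. $\widetilde{\mathcal{HR}}_n$ is the set of $T\in\mathcal{HR}_n$ such that every node with two children is a min-node and every min-node with exactly one child is an even one-child node. A descent of $\pi$ is $i\in[n-1]$ with $\pi_i>\pi_{i+1}$. For an index $i$, the $\pi_i$-factorization is $\pi=w_1w_2\pi_iw_4w_5$ where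 $w_2$ is the longest factor ending at position $i-1$ with all letters $>\pi_i$ and $w_4$ the longest factor starting at position $i+1$ with all letters $>\pi_i$. $\pi\in\mathfrak S_n$ is an André permutation if no $i\in\{2,\dots,n-1\}$ has $\pi_{i-1}>\pi_i>\pi_{i+1}$, $\pi_{n-1}<\pi_n$, and for every $i\in\{2,\dots,n-1\}$ with $\pi_{i-1}>\pi_i<\pi_{i+1}$, $\max(w_2)<\max(w_4)$. $d_{n,i}$ is the number of André permutations in $\mathfrak S_n$ with $i$ descents; $R_n(x)=\sum_{\pi\in\mathfrak S_n}x^{\mathrm{run}(\pi)}$ with $\mathrm{run}(\pi)$ one plus the number of peaks and valleys of $\pi$. *)

theory Defs
  imports "HOL-Library.Tree" "HOL-Combinatorics.Multiset_Permutations"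
          "HOL-Computational_Algebra.Polynomial"
begin

definition is_min_node :: "nat tree \<Rightarrow> bool" where
  "is_min_node s = (s \<noteq> Leaf \<and> value s = Min (set_tree s))"

definition is_max_node :: "nat tree \<Rightarrow> bool" where
  "is_max_node s = (s \<noteq> Leaf \<and> value s = Max (set_tree s))"

definition is_inner :: "nat tree \<Rightarrow> bool" where
  "is_inner s = (s \<noteq> Leaf \<and> (left s \<noteq> Leaf \<or> right s \<noteq> Leaf))"

definition nodes :: "nat tree \<Rightarrow> nat tree set" where
  "nodes t = subtrees t - {Leaf}"

definition min_max_tree :: "nat tree \<Rightarrow> bool" where
  "min_max_tree t = (\<forall>s\<in>nodes t. is_min_node s \<or> is_max_node s)"

definition HR_tree :: "nat tree \<Rightarrow> bool" where
  "HR_tree t = (min_max_tree t \<and>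
     (\<forall>s\<in>nodes t. is_inner s \<longrightarrow>
        right s \<noteq> Leaf \<and>
        (is_min_node s \<longrightarrow> Max (set_tree s) \<in> set_tree (right s)) \<and>
        (is_max_node s \<longrightarrow> Min (set_tree s) \<in> set_tree (right s))))"

definition HR :: "nat \<Rightarrow> nat tree set" where
  "HR n = {t. HR_tree t \<and> distinct (inorder t) \<and> set (inorder t) = {1..n}}"

definition one_child :: "nat tree \<Rightarrow> bool" where
  "one_child s = (s \<noteq> Leaf \<and> (left s = Leaf) \<noteq> (right s = Leaf))"

(* labels of one-child nodes, listed by increasing position in w(T) *)
definition one_child_list :: "nat tree \<Rightarrow> nat list" where
  "one_child_list t =
     filter (\<lambda>a. \<exists>s\<in>nodes t. one_child s \<and> value s = a) (inorder t)"

definition even_one_child :: "nat tree \<Rightarrow> nat \<Rightarrow> bool" where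
  "even_one_child t a =
     (\<exists>k. 1 \<le> k \<and> k \<le> length (one_child_list t) \<and> even k
          \<and> one_child_list t ! (k - 1) = a)"

definition HR_tilde :: "nat \<Rightarrow> nat tree set" where
  "HR_tilde n = {t \<in> HR n.
     (\<forall>s\<in>nodes t. left s \<noteq> Leaf \<and> right s \<noteq> Leaf \<longrightarrow> is_min_node s) \<and>
     (\<forall>s\<in>nodes t. is_min_node s \<and> one_child s \<longrightarrow> even_one_child t (value s))}"

definition min_count :: "nat tree \<Rightarrow> nat" where
  "min_count t = card {s\<in>nodes t. is_inner s \<and> is_min_node s}"

(* permutations as words; p \<pi> i is the 1-indexed letter \<pi>_i *)
definition p :: "nat list \<Rightarrow> nat \<Rightarrow> nat" where
  "p \<pi> i = \<pi> ! (i - 1)"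

definition descents :: "nat list \<Rightarrow> nat" where
  "descents \<pi> = card {i\<in>{1..<length \<pi>}. p \<pi> i > p \<pi> (i + 1)}"

definition w2_set :: "nat list \<Rightarrow> nat \<Rightarrow> nat set" where
  "w2_set \<pi> i = {p \<pi> j | j. 1 \<le> j \<and> j < i \<and> (\<forall>k\<in>{j..<i}. p \<pi> k > p \<pi> i)}"

definition w4_set :: "nat list \<Rightarrow> nat \<Rightarrow> nat set" where
  "w4_set \<pi> i = {p \<pi> j | j. i < j \<and> j \<le> length \<pi> \<and> (\<forall>k\<in>{i<..j}. p \<pi> k > p \<pi> i)}"

definition andre :: "nat list \<Rightarrow> bool" where
  "andre \<pi> = (let n = length \<pi> in
     (\<nexists>i. 2 \<le> i \<and> i \<le> n - 1 \<and> p \<pi> (i - 1) > p \<pi> i \<and> p \<pi> i > p \<pi> (i + 1)) \<and>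
     p \<pi> (n - 1) < p \<pi> n \<and>
     (\<forall>i. 2 \<le> i \<and> i \<le> n - 1 \<and> p \<pi> (i - 1) > p \<pi> i \<and> p \<pi> i < p \<pi> (i + 1)
          \<longrightarrow> Max (w2_set \<pi> i) < Max (w4_set \<pi> i)))"

definition d :: "nat \<Rightarrow> nat \<Rightarrow> nat" where
  "d n i = card {\<pi> \<in> permutations_of_set {1..n}. andre \<pi> \<and> descents \<pi> = i}"

definition M :: "nat \<Rightarrow> int poly" where
  "M n = (let l = (n + 1) div 2 in
     2 * (\<Sum>k = 1..l. smult (int (d n (k - 1))) ([:0, 1:] ^ k * [:1, 1:] ^ (l - k))))"

end

theory Submission
  imports Defs
begin


fun aP :: "nat \<Rightarrow> int poly" where
  "aP 0 = 1"
| "aP (Suc 0) = 1"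
| "aP (Suc (Suc n)) = (\<Sum>j\<le>n. of_nat (n choose j) * (if j = 0 then 1 else [:0,1:]) * aP j * aP (Suc n - j))"

fun GP :: "nat \<Rightarrow> bool \<Rightarrow> int poly" where
  "GP 0 e = 1"
| "GP (Suc 0) e = 1"
| "GP (Suc (Suc n)) e = GP (Suc n) (\<not>e) + (if e then [:0,1:] * GP (Suc n) False else 0)
     + [:0,1:] * (\<Sum>j\<in>{1..n}. of_nat (n choose j) * GP j e * GP (Suc n - j) (e \<noteq> even j))"


definition ev :: "int poly \<Rightarrow> real \<Rightarrow> real" where
  "ev P x = poly (map_poly real_of_int P) x"

lemma mp_add: "map_poly real_of_int (P + Q) = map_poly real_of_int P + map_poly real_of_int Q"
  by (rule poly_eqI) (simp add: coeff_map_poly)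

lemma mp_mult: "map_poly real_of_int (P * Q) = map_poly real_of_int P * map_poly real_of_int Q"
  by (rule poly_eqI) (simp add: coeff_map_poly coeff_mult)

lemma ev_add[simp]: "ev (P + Q) x = ev P x + ev Q x"
  by (simp add: ev_def mp_add)
lemma ev_mult[simp]: "ev (P * Q) x = ev P x * ev Q x"
  by (simp add: ev_def mp_mult)
lemma ev_0[simp]: "ev 0 x = 0" by (simp add: ev_def)
lemma ev_1[simp]: "ev 1 x = 1" by (simp add: ev_def)
lemma ev_pCons[simp]: "ev (pCons c P) x = real_of_int c + x * ev P x"
  by (simp add: ev_def map_poly_pCons)
lemma ev_X: "ev [:0,1:] x = x" by simp
lemma ev_X1: "ev [:1,1:] x = 1 + x" by simp
lemma ev_sum[simp]: "ev (\<Sum>i\<in>A. f i) x = (\<Sum>i\<in>A. ev (f i) x)"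
  by (induction A rule: infinite_finite_induct) auto
lemma ev_power[simp]: "ev (P ^ k) x = ev P x ^ k"
  by (induction k) auto
lemma ev_of_nat[simp]: "ev (of_nat k) x = real k"
  by (induction k) auto
lemma ev_smult[simp]: "ev (smult c P) x = real_of_int c * ev P x"
  by (simp add: ev_def map_poly_smult)

lemma ev_inj:
  assumes "\<And>x. x \<noteq> -1 \<Longrightarrow> ev P x = ev Q x"
  shows "P = Q"
proof -
  let ?R = "map_poly real_of_int (P - Q)"
  have "?R = map_poly real_of_int P - map_poly real_of_int Q"
    by (rule poly_eqI) (simp add: coeff_map_poly)
  hence r: "\<And>x. x \<noteq> -1 \<Longrightarrow> poly ?R x = 0" using assms by (simp add: ev_def)
  have "?R = 0"
  proof (rule ccontr)
    assume "?R \<noteq> 0"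
    hence "finite {x. poly ?R x = 0}" by (rule poly_roots_finite)
    moreover have "UNIV - {-1} \<subseteq> {x. poly ?R x = 0}" using r by auto
    ultimately have "finite (UNIV - {-1::real})" by (rule finite_subset[rotated])
    hence "finite (UNIV::real set)" by (metis Diff_empty finite_Diff_insert)
    thus False by (simp add: infinite_UNIV_char_0)
  qed
  hence "P - Q = 0" by (simp add: map_poly_eq_0_iff)
  thus ?thesis by simp
qed

definition D :: "nat \<Rightarrow> bool \<Rightarrow> nat" where
  "D n e = (if e then n div 2 else (n - 1) div 2)"

lemma D_key: "1 \<le> j \<Longrightarrow> j \<le> n \<Longrightarrow> D j e + D (Suc n - j) (e \<noteq> even j) + 1 = D (Suc (Suc n)) e"
proof -
  have h1: "\<And>b::nat. 1 \<le> b \<Longrightarrow> 2*b - Suc 0 = Suc (2*(b-1))" by simp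
  have h2: "\<And>b ba::nat. b \<le> ba \<Longrightarrow> Suc (2*ba) - 2*b = Suc(2*(ba-b))" by simp
  show "1 \<le> j \<Longrightarrow> j \<le> n \<Longrightarrow> ?thesis"
  unfolding D_def
  apply (cases e; cases "even j"; cases "even n")
  apply (auto elim!: evenE oddE simp: h1 h2)
  done
qed

lemma GP_ev:
  assumes "x \<noteq> -1"
  shows "ev (GP n e) x = (1 + x) ^ D n e * ev (aP n) (x / (1 + x))"
proof (induction n arbitrary: e rule: less_induct)
  case (less n)
  show ?case
  proof (cases n)
    case 0 thus ?thesis by (simp add: D_def)
  next
    case (Suc m)
    show ?thesis
    proof (cases m)
      case 0 thus ?thesis using Suc by (simp add: D_def)
    next
      case (Suc k)
      have nk: "n = Suc (Suc k)" using Suc \<open>n = Suc m\<close> by simp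
      define s where "s = 1 + x"
      define y where "y = x / (1 + x)"
      have s0: "s \<noteq> 0" using assms by (auto simp: s_def)
      have xs: "x = y * s" using s0 by (simp add: s_def y_def)
      define A where "A = (\<lambda>j. ev (aP j) y)"
      have IH: "\<And>j e. j < n \<Longrightarrow> ev (GP j e) x = s ^ D j e * A j"
        using less by (simp add: s_def y_def A_def)
      have aev: "ev (aP n) y = A (Suc k) + (\<Sum>j\<in>{1..k}. real (k choose j) * y * A j * A (Suc k - j))"
      proof -
        have "{..k} = insert 0 {1..k}" by auto
        hence "ev (aP n) y = (\<Sum>j\<in>insert 0 {1..k}. real (k choose j) * (if j = 0 then 1 else y) * A j * A (Suc k - j))"
          by (simp add: nk A_def algebra_simps)
        also have "\<dots> = A (Suc k) + (\<Sum>j\<in>{1..k}. real (k choose j) * y * A j * A (Suc k - j))"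
          by (subst sum.insert) (auto simp: A_def algebra_simps intro!: sum.cong)
        finally show ?thesis .
      qed
      have sumeq: "x * (\<Sum>j\<in>{1..k}. real (k choose j) * ev (GP j e) x * ev (GP (Suc k - j) (e \<noteq> even j)) x)
          = s ^ D n e * (\<Sum>j\<in>{1..k}. real (k choose j) * y * A j * A (Suc k - j))"
      proof -
        have "x * (\<Sum>j\<in>{1..k}. real (k choose j) * ev (GP j e) x * ev (GP (Suc k - j) (e \<noteq> even j)) x)
          = (\<Sum>j\<in>{1..k}. real (k choose j) * y * A j * A (Suc k - j) * (s * s ^ D j e * s ^ D (Suc k - j) (e \<noteq> even j)))"
          unfolding sum_distrib_left
        proof (rule sum.cong)
          fix j assume j: "j \<in> {1..k}"
          hence "j < n" "Suc k - j < n" using nk by auto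
          hence "x * (real (k choose j) * ev (GP j e) x * ev (GP (Suc k - j) (e \<noteq> even j)) x)
            = x * (real (k choose j) * (s ^ D j e * A j) * (s ^ D (Suc k - j) (e \<noteq> even j) * A (Suc k - j)))"
            by (simp add: IH)
          also have "\<dots> = real (k choose j) * y * A j * A (Suc k - j) * (s * s ^ D j e * s ^ D (Suc k - j) (e \<noteq> even j))"
            by (subst xs) (simp add: algebra_simps)
          finally show "x * (real (k choose j) * ev (GP j e) x * ev (GP (Suc k - j) (e \<noteq> even j)) x) = real (k choose j) * y * A j * A (Suc k - j) * (s * s ^ D j e * s ^ D (Suc k - j) (e \<noteq> even j))" .
        qed simp
        also have "\<dots> = (\<Sum>j\<in>{1..k}. real (k choose j) * y * A j * A (Suc k - j) * s ^ D n e)"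
        proof (rule sum.cong)
          fix j assume "j \<in> {1..k}"
          hence "D j e + D (Suc k - j) (e \<noteq> even j) + 1 = D n e" using D_key nk by auto
          moreover have "s ^ (D j e + D (Suc k - j) (e \<noteq> even j) + 1) = s * s ^ D j e * s ^ D (Suc k - j) (e \<noteq> even j)"
            by (simp add: power_add)
          ultimately have "s * s ^ D j e * s ^ D (Suc k - j) (e \<noteq> even j) = s ^ D n e"
            by simp
          thus "real (k choose j) * y * A j * A (Suc k - j) * (s * s ^ D j e * s ^ D (Suc k - j) (e \<noteq> even j))
             = real (k choose j) * y * A j * A (Suc k - j) * s ^ D n e" by simp
        qed simp
        finally show ?thesis by (simp add: sum_distrib_left mult_ac)
      qed
      have first: "ev (GP (Suc k) (\<not>e)) x + (if e then x * ev (GP (Suc k) False) x else 0) = s ^ D n e * A (Suc k)"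
      proof (cases e)
        case True
        have "D n e = Suc (D (Suc k) False)" using True nk by (simp add: D_def)
        thus ?thesis using True IH[of "Suc k"] nk by (simp add: s_def algebra_simps)
      next
        case False
        have "D n e = D (Suc k) True" using False nk by (simp add: D_def)
        thus ?thesis using False IH[of "Suc k"] nk by simp
      qed
      have "ev (GP n e) x = ev (GP (Suc k) (\<not>e)) x + (if e then x * ev (GP (Suc k) False) x else 0)
         + x * (\<Sum>j\<in>{1..k}. real (k choose j) * ev (GP j e) x * ev (GP (Suc k - j) (e \<noteq> even j)) x)"
        by (simp add: nk)
      also have "\<dots> = s ^ D n e * ev (aP n) y" using first sumeq aev by (simp add: algebra_simps)
      finally show ?thesis by (simp add: s_def y_def)
    qed
  qed
qed


lemma degree_aP: "degree (aP n) \<le> (n - 1) div 2"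
proof (induction n rule: less_induct)
  case (less n)
  show ?case
  proof (cases "n < 2")
    case True thus ?thesis by (cases n; cases "n - 1") auto
  next
    case False
    then obtain k where nk: "n = Suc (Suc k)" by (metis add_2_eq_Suc le_Suc_ex not_less)
    have "degree (aP n) \<le> (Suc k) div 2"
      unfolding nk aP.simps
    proof (rule degree_sum_le)
      fix j assume j: "j \<in> {..k}"
      let ?c = "of_nat (k choose j) :: int poly"
      have c: "degree ?c = 0" by (simp add: degree_of_nat)
      show "degree (?c * (if j = 0 then 1 else [:0, 1:]) * aP j * aP (Suc k - j)) \<le> Suc k div 2"
      proof (cases "j = 0")
        case True
        have "degree (aP (Suc k)) \<le> k div 2" using less[of "Suc k"] nk by simp
        hence "degree (?c * aP (Suc k)) \<le> Suc k div 2"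
          using degree_mult_le[of ?c "aP (Suc k)"] c by simp
        thus ?thesis using True by simp
      next
        case False
        have d1: "degree (aP j) \<le> (j - 1) div 2" using less[of j] nk j by simp
        have d2: "degree (aP (Suc k - j)) \<le> (Suc k - j - 1) div 2" using less[of "Suc k - j"] nk j by simp
        have ar: "1 + (j - 1) div 2 + (Suc k - j - 1) div 2 \<le> Suc k div 2"
          using False j by (cases "even j") (auto elim!: evenE oddE)
        have "degree (?c * [:0, 1:] * aP j * aP (Suc k - j)) \<le> degree (?c * [:0, 1:] * aP j) + degree (aP (Suc k - j))"
          by (rule degree_mult_le)
        also have "\<dots> \<le> degree (?c * [:0, 1:]) + degree (aP j) + degree (aP (Suc k - j))"
          using degree_mult_le[of "?c * [:0, 1:]" "aP j"] by simp
        also have "\<dots> \<le> 1 + degree (aP j) + degree (aP (Suc k - j))"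
          using degree_mult_le[of ?c "[:0, 1:]"] c by simp
        also have "\<dots> \<le> Suc k div 2" using d1 d2 ar by simp
        finally show ?thesis using False by simp
      qed
    qed simp
    thus ?thesis using nk by simp
  qed
qed


lemma ev_numeral[simp]: "ev (numeral k) x = numeral k"
  using ev_of_nat[of "numeral k" x] by simp

lemma ev_altdef: "degree P \<le> N \<Longrightarrow> ev P y = (\<Sum>i\<le>N. real_of_int (coeff P i) * y ^ i)"
proof -
  assume a: "degree P \<le> N"
  have dm: "degree (map_poly real_of_int P) \<le> N"
    using a by (meson map_poly_degree_leq le_trans)
  have "ev P y = (\<Sum>i\<le>degree (map_poly real_of_int P). coeff (map_poly real_of_int P) i * y ^ i)"
    by (simp add: ev_def poly_altdef)
  also have "\<dots> = (\<Sum>i\<le>N. coeff (map_poly real_of_int P) i * y ^ i)"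
    by (rule sum.mono_neutral_left) (use dm in \<open>auto simp: coeff_eq_0\<close>)
  finally show ?thesis by (simp add: coeff_map_poly)
qed

lemma final_alg:
  assumes n2: "n \<ge> 2" and dc: "\<And>k. int (d n k) = coeff (aP n) k"
  shows "M n = 2 * ([:0,1:] * GP n False)"
proof (rule ev_inj)
  fix x :: real assume x: "x \<noteq> -1"
  define l where "l = (n + 1) div 2"
  define s where "s = 1 + x"
  define y where "y = x / (1 + x)"
  have s0: "s \<noteq> 0" using x by (auto simp: s_def)
  have xs: "x = y * s" using s0 by (simp add: s_def y_def)
  have l1: "l \<ge> 1" using n2 by (simp add: l_def)
  have Dl: "D n False = l - 1" using n2 by (simp add: D_def l_def)
  have "ev (M n) x = 2 * (\<Sum>k=1..l. real (d n (k - 1)) * (x ^ k * s ^ (l - k)))"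
    by (simp add: M_def Let_def l_def s_def)
  also have "(\<Sum>k=1..l. real (d n (k - 1)) * (x ^ k * s ^ (l - k)))
      = (\<Sum>i\<le>l-1. real (d n i) * (x ^ Suc i * s ^ (l - 1 - i)))"
  proof -
    have e: "{1..l} = {Suc 0..Suc (l-1)}" using l1 by simp
    show ?thesis unfolding e sum.shift_bounds_cl_Suc_ivl atLeast0AtMost[symmetric] by simp
  qed
  also have "\<dots> = x * s ^ (l - 1) * (\<Sum>i\<le>l-1. real_of_int (coeff (aP n) i) * y ^ i)"
    unfolding sum_distrib_left
  proof (rule sum.cong)
    fix i assume "i \<in> {..l-1}"
    hence "s ^ (l - 1) = s ^ i * s ^ (l - 1 - i)" by (metis atMost_iff le_add_diff_inverse power_add)
    hence "x * s ^ (l - 1) * (real_of_int (coeff (aP n) i) * y ^ i)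
        = real_of_int (coeff (aP n) i) * ((y * s) ^ i * x * s ^ (l - 1 - i))"
      by (simp add: power_mult_distrib algebra_simps)
    also have "\<dots> = real_of_int (coeff (aP n) i) * (x ^ i * x * s ^ (l - 1 - i))"
      by (simp only: xs[symmetric])
    also have "\<dots> = real (d n i) * (x ^ Suc i * s ^ (l - 1 - i))"
      by (simp add: dc[of i, symmetric] algebra_simps)
    finally show "real (d n i) * (x ^ Suc i * s ^ (l - 1 - i)) = x * s ^ (l - 1) * (real_of_int (coeff (aP n) i) * y ^ i)" by (rule sym)
  qed simp
  also have "(\<Sum>i\<le>l-1. real_of_int (coeff (aP n) i) * y ^ i) = ev (aP n) y"
    using degree_aP[of n] Dl by (subst ev_altdef[where N = "l - 1"]) (auto simp: D_def)
  finally have "ev (M n) x = 2 * (x * s ^ D n False * ev (aP n) y)" using Dl by simp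
  also have "\<dots> = ev (2 * ([:0,1:] * GP n False)) x"
    using GP_ev[OF x, of n False] by (simp add: s_def y_def)
  finally show "ev (M n) x = ev (2 * ([:0,1:] * GP n False)) x" .
qed


lemma p_app:
  assumes "1 \<le> i"
  shows "p (u @ m # v) i = (if i \<le> length u then p u i else if i = Suc (length u) then m else p v (i - Suc (length u)))"
  using assms by (auto simp: p_def nth_append nth_Cons')

lemma p_in_set: "1 \<le> i \<Longrightarrow> i \<le> length w \<Longrightarrow> p w i \<in> set w"
  by (simp add: p_def)

definition DD :: "nat list \<Rightarrow> nat \<Rightarrow> bool" where
  "DD w i = (2 \<le> i \<and> i \<le> length w - 1 \<and> p w (i - 1) > p w i \<and> p w i > p w (i + 1))"

definition BV :: "nat list \<Rightarrow> nat \<Rightarrow> bool" where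
  "BV w i = (2 \<le> i \<and> i \<le> length w - 1 \<and> p w (i - 1) > p w i \<and> p w i < p w (i + 1)
       \<and> \<not> Max (w2_set w i) < Max (w4_set w i))"

lemma andre_char: "andre w \<longleftrightarrow> (\<nexists>i. DD w i) \<and> p w (length w - 1) < p w (length w) \<and> (\<nexists>i. BV w i)"
  unfolding andre_def DD_def BV_def Let_def by blast

definition andreM :: "nat list \<Rightarrow> bool" where
  "andreM w = (length w \<le> 1 \<or> andre w)"

lemma andreM_char: "andreM w \<longleftrightarrow> (\<nexists>i. DD w i) \<and> (2 \<le> length w \<longrightarrow> p w (length w - 1) < p w (length w)) \<and> (\<nexists>i. BV w i)"
  unfolding andreM_def andre_char DD_def BV_def by auto

context
  fixes u v :: "nat list" and m :: nat
  assumes mless: "\<And>x. x \<in> set u \<union> set v \<Longrightarrow> m < x"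
begin

private abbreviation "\<pi> \<equiv> u @ m # v"

lemma pu: "1 \<le> i \<Longrightarrow> i \<le> (length u) \<Longrightarrow> p \<pi> i = p u i" by (simp add: p_app)
lemma pm: "p \<pi> (Suc (length u)) = m" by (simp add: p_app)
lemma pv: "1 \<le> i \<Longrightarrow> p \<pi> (Suc (length u) + i) = p v i" by (simp add: p_app)

lemma pu_gt: "1 \<le> i \<Longrightarrow> i \<le> (length u) \<Longrightarrow> m < p u i" using mless p_in_set by auto
lemma pv_gt: "1 \<le> i \<Longrightarrow> i \<le> length v \<Longrightarrow> m < p v i" using mless p_in_set by auto

lemma len_pi: "length \<pi> = Suc ((length u) + length v)" by simp

lemma E1: "(\<exists>i. DD \<pi> i) \<longleftrightarrow> (\<exists>i. DD u i) \<or> (2 \<le> (length u) \<and> p u ((length u) - 1) > p u (length u)) \<or> (\<exists>i. DD v i)"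
proof
  assume "\<exists>i. DD \<pi> i"
  then obtain i where i: "DD \<pi> i" by blast
  hence i2: "2 \<le> i" and iN: "i \<le> (length u) + length v" and d1: "p \<pi> (i - 1) > p \<pi> i" and d2: "p \<pi> i > p \<pi> (i + 1)"
    by (auto simp: DD_def)
  consider "i + 1 \<le> (length u)" | "i = (length u)" | "i = Suc (length u)" | "i \<ge> Suc (Suc (length u))" by linarith
  thus "(\<exists>i. DD u i) \<or> (2 \<le> (length u) \<and> p u ((length u) - 1) > p u (length u)) \<or> (\<exists>i. DD v i)"
  proof cases
    case 1
    hence "DD u i" using i2 d1 d2 pu[of i] pu[of "i - 1"] pu[of "i + 1"] by (auto simp: DD_def)
    thus ?thesis by blast
  next
    case 2
    thus ?thesis using i2 d1 pu[of "length u"] pu[of "(length u) - 1"] by auto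
  next
    case 3
    have "m < p v 1" using pv_gt[of 1] iN 3 by simp
    thus ?thesis using d2 3 pm pv[of 1] by simp
  next
    case 4
    then obtain i' where i': "i = Suc (length u) + i'" "1 \<le> i'" by (metis Suc_le_D add_Suc_shift le_add1 le_add_diff_inverse plus_1_eq_Suc)
    show ?thesis
    proof (cases "i' = 1")
      case True
      thus ?thesis using d1 i' pm pv[of 1] pv_gt[of 1] iN by simp
    next
      case False
      hence "DD v i'" using i' d1 d2 iN pv[of i'] pv[of "i' - 1"] pv[of "i' + 1"]
        by (auto simp: DD_def add.commute)
      thus ?thesis by blast
    qed
  qed
next
  assume "(\<exists>i. DD u i) \<or> (2 \<le> (length u) \<and> p u ((length u) - 1) > p u (length u)) \<or> (\<exists>i. DD v i)"
  thus "\<exists>i. DD \<pi> i"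
  proof (elim disjE exE)
    fix i assume "DD u i"
    hence "DD \<pi> i" using pu[of i] pu[of "i - 1"] pu[of "i + 1"] by (auto simp: DD_def)
    thus ?thesis by blast
  next
    assume a: "2 \<le> (length u) \<and> p u ((length u) - 1) > p u (length u)"
    hence "DD \<pi> (length u)" using pu[of "length u"] pu[of "(length u) - 1"] pm pu_gt[of "length u"] by (auto simp: DD_def)
    thus ?thesis by blast
  next
    fix i assume a: "DD v i"
    hence "DD \<pi> (Suc (length u) + i)" using pv[of i] pv[of "i - 1"] pv[of "i + 1"]
      by (auto simp: DD_def)
    thus ?thesis by blast
  qed
qed

lemma E2: "p \<pi> (length \<pi> - 1) < p \<pi> (length \<pi>) \<longleftrightarrow> v \<noteq> [] \<and> (2 \<le> length v \<longrightarrow> p v (length v - 1) < p v (length v))"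
proof (cases v)
  case Nil
  show ?thesis
  proof (cases "(length u) = 0")
    case True thus ?thesis using Nil by (simp add: p_def)
  next
    case False
    hence "1 \<le> (length u)" by (cases u) auto
    thus ?thesis using Nil pu[of "length u"] pm pu_gt[of "length u"] by simp
  qed
next
  case (Cons a v')
  show ?thesis
  proof (cases v')
    case Nil
    thus ?thesis using Cons pm pv[of 1] pv_gt[of 1] by simp
  next
    case (Cons b v'')
    hence "length v \<ge> 2" using \<open>v = a # v'\<close> by simp
    hence "length \<pi> - 1 = Suc (length u) + (length v - 1)" "length \<pi> = Suc (length u) + length v" by auto
    thus ?thesis using pv[of "length v - 1"] pv[of "length v"] \<open>length v \<ge> 2\<close> \<open>v = a # v'\<close> by simp
  qed
qed

lemma W2u: "1 \<le> i \<Longrightarrow> i \<le> (length u) \<Longrightarrow> w2_set \<pi> i = w2_set u i"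
proof -
  assume i: "1 \<le> i" "i \<le> (length u)"
  have e: "\<And>j. 1 \<le> j \<Longrightarrow> j \<le> i \<Longrightarrow> p \<pi> j = p u j" using pu i by auto
  show ?thesis unfolding w2_set_def
  proof (intro set_eqI iffI)
    fix x assume "x \<in> {p \<pi> j |j. 1 \<le> j \<and> j < i \<and> (\<forall>k\<in>{j..<i}. p \<pi> i < p \<pi> k)}"
    then obtain j where j: "x = p \<pi> j" "1 \<le> j" "j < i" "\<forall>k\<in>{j..<i}. p \<pi> i < p \<pi> k" by blast
    have "\<forall>k\<in>{j..<i}. p u i < p u k"
    proof
      fix k assume k: "k \<in> {j..<i}"
      hence "p \<pi> i < p \<pi> k" using j(4) by blast
      thus "p u i < p u k" using j(2) k e[of k] e[of i] i by auto
    qed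
    moreover have "x = p u j" using j e by simp
    ultimately show "x \<in> {p u j |j. 1 \<le> j \<and> j < i \<and> (\<forall>k\<in>{j..<i}. p u i < p u k)}" using j by blast
  next
    fix x assume "x \<in> {p u j |j. 1 \<le> j \<and> j < i \<and> (\<forall>k\<in>{j..<i}. p u i < p u k)}"
    then obtain j where j: "x = p u j" "1 \<le> j" "j < i" "\<forall>k\<in>{j..<i}. p u i < p u k" by blast
    have "\<forall>k\<in>{j..<i}. p \<pi> i < p \<pi> k"
    proof
      fix k assume k: "k \<in> {j..<i}"
      hence "p u i < p u k" using j(4) by blast
      thus "p \<pi> i < p \<pi> k" using j(2) k e[of k] e[of i] i by auto
    qed
    moreover have "x = p \<pi> j" using j e by simp
    ultimately show "x \<in> {p \<pi> j |j. 1 \<le> j \<and> j < i \<and> (\<forall>k\<in>{j..<i}. p \<pi> i < p \<pi> k)}" using j by blast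
  qed
qed

lemma W4u: "1 \<le> i \<Longrightarrow> i \<le> length u \<Longrightarrow> w4_set \<pi> i = w4_set u i"
proof -
  assume i: "1 \<le> i" "i \<le> length u"
  have e: "\<And>j. 1 \<le> j \<Longrightarrow> j \<le> length u \<Longrightarrow> p \<pi> j = p u j" using pu by auto
  have gi: "m < p u i" using pu_gt i by auto
  show ?thesis unfolding w4_set_def
  proof (intro set_eqI iffI)
    fix x assume "x \<in> {p \<pi> j |j. i < j \<and> j \<le> length \<pi> \<and> (\<forall>k\<in>{i<..j}. p \<pi> i < p \<pi> k)}"
    then obtain j where j: "x = p \<pi> j" "i < j" "j \<le> length \<pi>" "\<forall>k\<in>{i<..j}. p \<pi> i < p \<pi> k" by blast
    have jL: "j \<le> length u"
    proof (rule ccontr)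
      assume "\<not> j \<le> length u"
      hence "Suc (length u) \<in> {i<..j}" using i by auto
      hence "p \<pi> i < p \<pi> (Suc (length u))" using j(4) by blast
      hence "p \<pi> i < m" using pm by simp
      thus False using gi e i by simp
    qed
    have "\<forall>k\<in>{i<..j}. p u i < p u k"
    proof
      fix k assume k: "k \<in> {i<..j}"
      hence "p \<pi> i < p \<pi> k" using j(4) by blast
      thus "p u i < p u k" using k jL e[of k] e[of i] i by auto
    qed
    moreover have "x = p u j" using j e jL i by simp
    ultimately show "x \<in> {p u j |j. i < j \<and> j \<le> length u \<and> (\<forall>k\<in>{i<..j}. p u i < p u k)}" using j jL by blast
  next
    fix x assume "x \<in> {p u j |j. i < j \<and> j \<le> length u \<and> (\<forall>k\<in>{i<..j}. p u i < p u k)}"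
    then obtain j where j: "x = p u j" "i < j" "j \<le> length u" "\<forall>k\<in>{i<..j}. p u i < p u k" by blast
    have "\<forall>k\<in>{i<..j}. p \<pi> i < p \<pi> k"
    proof
      fix k assume k: "k \<in> {i<..j}"
      hence "p u i < p u k" using j(4) by blast
      thus "p \<pi> i < p \<pi> k" using k j e[of k] e[of i] i by auto
    qed
    moreover have "x = p \<pi> j" using j e i by simp
    moreover have "j \<le> length \<pi>" using j by simp
    ultimately show "x \<in> {p \<pi> j |j. i < j \<and> j \<le> length \<pi> \<and> (\<forall>k\<in>{i<..j}. p \<pi> i < p \<pi> k)}" using j by blast
  qed
qed

lemma W2v: "1 \<le> i \<Longrightarrow> i \<le> length v \<Longrightarrow> w2_set \<pi> (Suc (length u) + i) = w2_set v i"
proof -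
  assume i: "1 \<le> i" "i \<le> length v"
  have gi: "m < p v i" using pv_gt i by auto
  have pvi: "p \<pi> (Suc (length u) + i) = p v i" using pv i by simp
  show ?thesis unfolding w2_set_def
  proof (intro set_eqI iffI)
    fix x assume "x \<in> {p \<pi> j |j. 1 \<le> j \<and> j < Suc (length u) + i \<and> (\<forall>k\<in>{j..<Suc (length u) + i}. p \<pi> (Suc (length u) + i) < p \<pi> k)}"
    then obtain j where j: "x = p \<pi> j" "1 \<le> j" "j < Suc (length u) + i" "\<forall>k\<in>{j..<Suc (length u) + i}. p \<pi> (Suc (length u) + i) < p \<pi> k" by blast
    have jL: "j > Suc (length u)"
    proof (rule ccontr)
      assume "\<not> j > Suc (length u)"
      hence "Suc (length u) \<in> {j..<Suc (length u) + i}" using i by auto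
      hence "p \<pi> (Suc (length u) + i) < p \<pi> (Suc (length u))" using j(4) by blast
      hence "p v i < m" using pm pvi by simp
      thus False using gi by simp
    qed
    define j' where "j' = j - Suc (length u)"
    have j': "j = Suc (length u) + j'" "1 \<le> j'" using jL by (auto simp: j'_def)
    have "\<forall>k\<in>{j'..<i}. p v i < p v k"
    proof
      fix k assume k: "k \<in> {j'..<i}"
      hence "Suc (length u) + k \<in> {j..<Suc (length u) + i}" using j' by auto
      hence "p \<pi> (Suc (length u) + i) < p \<pi> (Suc (length u) + k)" using j(4) by blast
      thus "p v i < p v k" using pvi pv[of k] j' k by auto
    qed
    moreover have "x = p v j'" using j j' pv by simp
    moreover have "j' < i" using j j' by simp
    ultimately show "x \<in> {p v j |j. 1 \<le> j \<and> j < i \<and> (\<forall>k\<in>{j..<i}. p v i < p v k)}" using j' by blast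
  next
    fix x assume "x \<in> {p v j |j. 1 \<le> j \<and> j < i \<and> (\<forall>k\<in>{j..<i}. p v i < p v k)}"
    then obtain j where j: "x = p v j" "1 \<le> j" "j < i" "\<forall>k\<in>{j..<i}. p v i < p v k" by blast
    have "\<forall>k\<in>{Suc (length u) + j..<Suc (length u) + i}. p \<pi> (Suc (length u) + i) < p \<pi> k"
    proof
      fix k assume k: "k \<in> {Suc (length u) + j..<Suc (length u) + i}"
      define k' where "k' = k - Suc (length u)"
      have k': "k = Suc (length u) + k'" "k' \<in> {j..<i}" using k by (auto simp: k'_def)
      hence "p v i < p v k'" using j(4) by blast
      thus "p \<pi> (Suc (length u) + i) < p \<pi> k" using k' j pvi pv[of k'] by auto
    qed
    moreover have "x = p \<pi> (Suc (length u) + j)" using j pv by simp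
    moreover have "1 \<le> Suc (length u) + j" "Suc (length u) + j < Suc (length u) + i" using j by auto
    ultimately show "x \<in> {p \<pi> j |j. 1 \<le> j \<and> j < Suc (length u) + i \<and> (\<forall>k\<in>{j..<Suc (length u) + i}. p \<pi> (Suc (length u) + i) < p \<pi> k)}"
      by blast
  qed
qed

lemma W4v: "1 \<le> i \<Longrightarrow> w4_set \<pi> (Suc (length u) + i) = w4_set v i"
proof -
  assume i: "1 \<le> i"
  have pvi: "p \<pi> (Suc (length u) + i) = p v i" using pv i by simp
  show ?thesis unfolding w4_set_def
  proof (intro set_eqI iffI)
    fix x assume "x \<in> {p \<pi> j |j. Suc (length u) + i < j \<and> j \<le> length \<pi> \<and> (\<forall>k\<in>{Suc (length u) + i<..j}. p \<pi> (Suc (length u) + i) < p \<pi> k)}"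
    then obtain j where j: "x = p \<pi> j" "Suc (length u) + i < j" "j \<le> length \<pi>" "\<forall>k\<in>{Suc (length u) + i<..j}. p \<pi> (Suc (length u) + i) < p \<pi> k" by blast
    define j' where "j' = j - Suc (length u)"
    have j': "j = Suc (length u) + j'" "i < j'" "j' \<le> length v" using j by (auto simp: j'_def)
    have "\<forall>k\<in>{i<..j'}. p v i < p v k"
    proof
      fix k assume k: "k \<in> {i<..j'}"
      hence "Suc (length u) + k \<in> {Suc (length u) + i<..j}" using j' by auto
      hence "p \<pi> (Suc (length u) + i) < p \<pi> (Suc (length u) + k)" using j(4) by blast
      thus "p v i < p v k" using pvi pv[of k] k i by auto
    qed
    moreover have "x = p v j'" using j j' pv i by simp
    ultimately show "x \<in> {p v j |j. i < j \<and> j \<le> length v \<and> (\<forall>k\<in>{i<..j}. p v i < p v k)}" using j' by blast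
  next
    fix x assume "x \<in> {p v j |j. i < j \<and> j \<le> length v \<and> (\<forall>k\<in>{i<..j}. p v i < p v k)}"
    then obtain j where j: "x = p v j" "i < j" "j \<le> length v" "\<forall>k\<in>{i<..j}. p v i < p v k" by blast
    have "\<forall>k\<in>{Suc (length u) + i<..Suc (length u) + j}. p \<pi> (Suc (length u) + i) < p \<pi> k"
    proof
      fix k assume k: "k \<in> {Suc (length u) + i<..Suc (length u) + j}"
      define k' where "k' = k - Suc (length u)"
      have k': "k = Suc (length u) + k'" "k' \<in> {i<..j}" using k by (auto simp: k'_def)
      hence "p v i < p v k'" using j(4) by blast
      thus "p \<pi> (Suc (length u) + i) < p \<pi> k" using k' i pvi pv[of k'] by auto
    qed
    moreover have "x = p \<pi> (Suc (length u) + j)" using j pv i by simp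
    moreover have "Suc (length u) + i < Suc (length u) + j" "Suc (length u) + j \<le> length \<pi>" using j by auto
    ultimately show "x \<in> {p \<pi> j |j. Suc (length u) + i < j \<and> j \<le> length \<pi> \<and> (\<forall>k\<in>{Suc (length u) + i<..j}. p \<pi> (Suc (length u) + i) < p \<pi> k)}"
      by blast
  qed
qed

lemma W2m: "w2_set \<pi> (Suc (length u)) = set u"
proof (intro set_eqI iffI)
  fix x assume "x \<in> w2_set \<pi> (Suc (length u))"
  then obtain j where "x = p \<pi> j" "1 \<le> j" "j < Suc (length u)" unfolding w2_set_def by blast
  thus "x \<in> set u" using pu p_in_set by auto
next
  fix x assume "x \<in> set u"
  then obtain j where j: "j < length u" "u ! j = x" by (auto simp: in_set_conv_nth)
  have "\<forall>k\<in>{Suc j..<Suc (length u)}. p \<pi> (Suc (length u)) < p \<pi> k"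
  proof
    fix k assume k: "k \<in> {Suc j..<Suc (length u)}"
    thus "p \<pi> (Suc (length u)) < p \<pi> k" using pm pu[of k] pu_gt[of k] by auto
  qed
  moreover have "x = p \<pi> (Suc j)" using j pu[of "Suc j"] by (simp add: p_def)
  moreover have "1 \<le> Suc j" "Suc j < Suc (length u)" using j by auto
  ultimately show "x \<in> w2_set \<pi> (Suc (length u))" unfolding w2_set_def by blast
qed

lemma W4m: "w4_set \<pi> (Suc (length u)) = set v"
proof (intro set_eqI iffI)
  fix x assume "x \<in> w4_set \<pi> (Suc (length u))"
  then obtain j where j: "x = p \<pi> j" "Suc (length u) < j" "j \<le> length \<pi>" unfolding w4_set_def by blast
  define j' where "j' = j - Suc (length u)"
  have j': "j = Suc (length u) + j'" "1 \<le> j'" "j' \<le> length v" using j by (auto simp: j'_def)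
  thus "x \<in> set v" using j pv[of j'] p_in_set[of j' v] by auto
next
  fix x assume "x \<in> set v"
  then obtain j where j: "j < length v" "v ! j = x" by (auto simp: in_set_conv_nth)
  have "\<forall>k\<in>{Suc (length u)<..Suc (length u) + Suc j}. p \<pi> (Suc (length u)) < p \<pi> k"
  proof
    fix k assume k: "k \<in> {Suc (length u)<..Suc (length u) + Suc j}"
    define k' where "k' = k - Suc (length u)"
    have k': "k = Suc (length u) + k'" "1 \<le> k'" "k' \<le> Suc j" using k by (auto simp: k'_def)
    thus "p \<pi> (Suc (length u)) < p \<pi> k" using pm pv[of k'] pv_gt[of k'] j by auto
  qed
  moreover have "x = p \<pi> (Suc (length u) + Suc j)" using j pv[of "Suc j"] by (simp add: p_def)
  moreover have "Suc (length u) < Suc (length u) + Suc j" "Suc (length u) + Suc j \<le> length \<pi>" using j by auto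
  ultimately show "x \<in> w4_set \<pi> (Suc (length u))" unfolding w4_set_def by blast
qed

lemma E3: "(\<exists>i. BV \<pi> i) \<longleftrightarrow> (\<exists>i. BV u i) \<or> (u \<noteq> [] \<and> v \<noteq> [] \<and> \<not> Max (set u) < Max (set v)) \<or> (\<exists>i. BV v i)"
proof
  assume "\<exists>i. BV \<pi> i"
  then obtain i where i: "BV \<pi> i" by blast
  hence i2: "2 \<le> i" and iN: "i \<le> length u + length v" and d1: "p \<pi> (i - 1) > p \<pi> i" and d2: "p \<pi> i < p \<pi> (i + 1)"
    and mx: "\<not> Max (w2_set \<pi> i) < Max (w4_set \<pi> i)"
    by (auto simp: BV_def)
  consider "i + 1 \<le> length u" | "i = length u" | "i = Suc (length u)" | "i \<ge> Suc (Suc (length u))" by linarith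
  thus "(\<exists>i. BV u i) \<or> (u \<noteq> [] \<and> v \<noteq> [] \<and> \<not> Max (set u) < Max (set v)) \<or> (\<exists>i. BV v i)"
  proof cases
    case 1
    hence "BV u i" using i2 d1 d2 mx pu[of i] pu[of "i - 1"] pu[of "i + 1"] W2u[of i] W4u[of i] by (auto simp: BV_def)
    thus ?thesis by blast
  next
    case 2
    thus ?thesis using i2 d2 pu[of "length u"] pm pu_gt[of "length u"] by simp
  next
    case 3
    hence "u \<noteq> []" "v \<noteq> []" using i2 iN by auto
    thus ?thesis using mx 3 W2m W4m by simp
  next
    case 4
    define i' where "i' = i - Suc (length u)"
    have i': "i = Suc (length u) + i'" "1 \<le> i'" using 4 by (auto simp: i'_def)
    show ?thesis
    proof (cases "i' = 1")
      case True
      thus ?thesis using d1 i' pm pv[of 1] pv_gt[of 1] iN by simp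
    next
      case False
      have "i - 1 = Suc (length u) + (i' - 1)" "i + 1 = Suc (length u) + (i' + 1)" using i' False by auto
      hence "BV v i'" using i' False d1 d2 iN mx pv[of i'] pv[of "i' - 1"] pv[of "i' + 1"] W2v[of i'] W4v[of i']
        by (auto simp: BV_def)
      thus ?thesis by blast
    qed
  qed
next
  assume "(\<exists>i. BV u i) \<or> (u \<noteq> [] \<and> v \<noteq> [] \<and> \<not> Max (set u) < Max (set v)) \<or> (\<exists>i. BV v i)"
  thus "\<exists>i. BV \<pi> i"
  proof (elim disjE exE)
    fix i assume a: "BV u i"
    hence "BV \<pi> i" using pu[of i] pu[of "i - 1"] pu[of "i + 1"] W2u[of i] W4u[of i] by (auto simp: BV_def)
    thus ?thesis by blast
  next
    assume a: "u \<noteq> [] \<and> v \<noteq> [] \<and> \<not> Max (set u) < Max (set v)"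
    hence "1 \<le> length u" "1 \<le> length v" by (simp_all add: Suc_le_eq)
    hence "BV \<pi> (Suc (length u))" using a pu[of "length u"] pm pu_gt[of "length u"] pv[of 1] pv_gt[of 1] W2m W4m
      by (auto simp: BV_def)
    thus ?thesis by blast
  next
    fix i assume a: "BV v i"
    hence "i - 1 \<ge> 1" "Suc (length u) + i - 1 = Suc (length u) + (i - 1)" by (auto simp: BV_def)
    hence "BV \<pi> (Suc (length u) + i)" using a pv[of i] pv[of "i - 1"] pv[of "i + 1"] W2v[of i] W4v[of i]
      by (auto simp: BV_def)
    thus ?thesis by blast
  qed
qed

lemma andre_decomp:
  assumes du: "distinct u"
  shows "andre \<pi> \<longleftrightarrow> v \<noteq> [] \<and> (u \<noteq> [] \<longrightarrow> Max (set u) < Max (set v)) \<and> andreM u \<and> andreM v"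
proof -
  have ne: "2 \<le> length u \<Longrightarrow> p u (length u - 1) \<noteq> p u (length u)"
    using du by (auto simp: p_def nth_eq_iff_index_eq)
  have "andre \<pi> \<longleftrightarrow> \<not> (\<exists>i. DD \<pi> i) \<and> p \<pi> (length \<pi> - 1) < p \<pi> (length \<pi>) \<and> \<not> (\<exists>i. BV \<pi> i)"
    by (simp add: andre_char)
  also have "\<dots> \<longleftrightarrow> v \<noteq> [] \<and> (u \<noteq> [] \<longrightarrow> Max (set u) < Max (set v)) \<and> andreM u \<and> andreM v"
  proof -
    have key: "2 \<le> length u \<Longrightarrow> (p u (length u - 1) < p u (length u)) \<longleftrightarrow> \<not> (p u (length u) < p u (length u - 1))"
      using ne by auto
    show ?thesis unfolding E1 E2 E3 andreM_char using key by blast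
  qed
  finally show ?thesis .
qed

end


lemma descents_Nil: "descents [] = 0" by (simp add: descents_def)
lemma descents_single: "descents [a] = 0" by (simp add: descents_def)

lemma descents_Cons2: "descents (x # y # w) = (if y < x then 1 else 0) + descents (y # w)"
proof -
  let ?A = "{i \<in> {1..<length (y # w)}. p (y # w) (i + 1) < p (y # w) i}"
  let ?S = "{i \<in> {1..<length (x # y # w)}. p (x # y # w) (i + 1) < p (x # y # w) i}"
  have ps: "\<And>i. 1 \<le> i \<Longrightarrow> p (x # y # w) (Suc i) = p (y # w) i"
    by (simp add: p_def nth_Cons')
  have "?S = (if y < x then {1} else {}) \<union> Suc ` ?A"
  proof (intro set_eqI iffI)
    fix i assume i: "i \<in> ?S"
    show "i \<in> (if y < x then {1} else {}) \<union> Suc ` ?A"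
    proof (cases "i = 1")
      case True thus ?thesis using i by (simp add: p_def)
    next
      case False
      then obtain i' where "i = Suc i'" "1 \<le> i'" using i by (cases i) auto
      thus ?thesis using i ps[of i'] ps[of "Suc i'"] by auto
    qed
  next
    fix i assume i: "i \<in> (if y < x then {1} else {}) \<union> Suc ` ?A"
    thus "i \<in> ?S"
    proof (cases "i = 1")
      case True thus ?thesis using i by (auto simp: p_def split: if_splits)
    next
      case False
      then obtain i' where "i = Suc i'" "i' \<in> ?A" using i by (auto split: if_splits)
      thus ?thesis using ps[of i'] ps[of "Suc i'"] by auto
    qed
  qed
  moreover have "1 \<notin> Suc ` ?A" by auto
  moreover have "card (Suc ` ?A) = card ?A" by (rule card_image) simp
  ultimately have "card ?S = (if y < x then 1 else 0) + card ?A" by (auto simp: card_insert_if)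
  thus ?thesis by (simp add: descents_def)
qed

lemma descents_append:
  "xs \<noteq> [] \<Longrightarrow> ys \<noteq> [] \<Longrightarrow> descents (xs @ ys) = descents xs + descents ys + (if hd ys < last xs then 1 else 0)"
proof (induction xs rule: induct_list012)
  case 1 thus ?case by simp
next
  case (2 x)
  then obtain y ys' where "ys = y # ys'" by (cases ys) auto
  thus ?case by (simp add: descents_Cons2 descents_single)
next
  case (3 x y zs)
  thus ?case by (simp add: descents_Cons2)
qed

lemma descents_decomp:
  assumes "\<And>x. x \<in> set v \<Longrightarrow> m < x" "u \<noteq> [] \<Longrightarrow> m < last u"
  shows "descents (u @ m # v) = descents u + descents v + (if u = [] then 0 else 1)"
proof -
  have mv: "descents (m # v) = descents v"
    using assms(1) by (cases v) (force simp: descents_Cons2 descents_single descents_Nil)+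
  show ?thesis
  proof (cases "u = []")
    case True thus ?thesis using mv by (simp add: descents_Nil)
  next
    case False
    thus ?thesis using descents_append[of u "m # v"] mv assms(2) by simp
  qed
qed

definition Pset :: "nat set \<Rightarrow> nat list set" where
  "Pset S = {\<pi> \<in> permutations_of_set S. andreM \<pi>}"

definition AP :: "nat set \<Rightarrow> int poly" where
  "AP S = (\<Sum>\<pi>\<in>Pset S. [:0,1:] ^ descents \<pi>)"

lemma finite_Pset: "finite (Pset S)"
proof (cases "finite S")
  case True thus ?thesis unfolding Pset_def by simp
next
  case False thus ?thesis unfolding Pset_def by (simp add: permutations_of_set_infinite)
qed


lemma perm_iff: "xs \<in> permutations_of_set A \<longleftrightarrow> set xs = A \<and> distinct xs"
  by (simp add: permutations_of_set_def)

lemma AP_rec: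
  assumes fin: "finite S" and c2: "card S \<ge> 2"
  shows "AP S = (\<Sum>U\<in>Pow (S - {Min S, Max S}). (if U = {} then 1 else [:0,1:]) * AP U * AP (S - {Min S} - U))"
proof -
  define m where "m = Min S"
  define M where "M = Max S"
  have Sne: "S \<noteq> {}" using c2 by auto
  have mS: "m \<in> S" and MS: "M \<in> S" using fin Sne by (auto simp: m_def M_def)
  have mM: "m < M"
  proof -
    have "\<not> card S \<le> Suc 0" using c2 by simp
    then obtain a b where "a \<in> S" "b \<in> S" "a \<noteq> b" using card_le_Suc0_iff_eq[OF fin] by blast
    moreover have "\<And>x. x \<in> S \<Longrightarrow> m \<le> x \<and> x \<le> M" using fin by (auto simp: m_def M_def)
    ultimately have "m \<le> a" "a \<le> M" "m \<le> b" "b \<le> M" "a \<noteq> b" by auto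
    thus ?thesis by arith
  qed
  have mless: "\<And>x. x \<in> S \<Longrightarrow> x \<noteq> m \<Longrightarrow> m < x" using fin by (auto simp: m_def intro: le_neq_trans)
  have Mgr: "\<And>x. x \<in> S \<Longrightarrow> x \<le> M" using fin by (auto simp: M_def)
  define Q where "Q = Sigma (Pow (S - {m, M})) (\<lambda>U. Pset U \<times> Pset (S - {m} - U))"
  define F where "F = (\<lambda>(U::nat set, (u::nat list, v::nat list)). u @ m # v)"
  have memQ: "\<And>U u v. (U, (u, v)) \<in> Q \<longleftrightarrow> U \<subseteq> S - {m, M} \<and> set u = U \<and> distinct u \<and> andreM u
      \<and> set v = S - {m} - U \<and> distinct v \<and> andreM v"
    by (auto simp: Q_def Pset_def perm_iff)
  have inj: "inj_on F Q"
  proof (rule inj_onI)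
    fix a b assume a: "a \<in> Q" and b: "b \<in> Q" and e: "F a = F b"
    obtain U u v where av: "a = (U, (u, v))" by (cases a) auto
    obtain U' u' v' where bv: "b = (U', (u', v'))" by (cases b) auto
    have "m \<notin> set u" "m \<notin> set v" using a memQ av by auto
    hence "u = u' \<and> v = v'" using e append_Cons_eq_iff[of m u v u' v'] by (simp add: F_def av bv)
    moreover have "U = set u" "U' = set u'" using a b memQ av bv by auto
    ultimately show "a = b" using av bv by simp
  qed
  have img: "F ` Q = Pset S"
  proof (intro set_eqI iffI)
    fix \<pi> assume "\<pi> \<in> F ` Q"
    then obtain U u v where q: "(U, (u, v)) \<in> Q" and pe: "\<pi> = u @ m # v" by (auto simp: F_def)
    have U: "U \<subseteq> S - {m, M}" "set u = U" "distinct u" "andreM u" "set v = S - {m} - U" "distinct v" "andreM v"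
      using q memQ by auto
    have setpi: "set \<pi> = S" using U pe mS by auto
    have dpi: "distinct \<pi>" using U pe by auto
    have ml: "\<And>x. x \<in> set u \<union> set v \<Longrightarrow> m < x" using U mless by auto
    have vne: "v \<noteq> []" using U MS mM by auto
    have "Max (set v) = M" using U MS mM fin Mgr by (intro Max_eqI) auto
    moreover have "u \<noteq> [] \<Longrightarrow> Max (set u) < M"
    proof -
      assume "u \<noteq> []"
      hence "Max (set u) \<in> set u" by simp
      thus "Max (set u) < M" using U Mgr by (metis Diff_iff insertCI le_neq_trans subsetD)
    qed
    moreover have "andre (u @ m # v) \<longleftrightarrow> v \<noteq> [] \<and> (u \<noteq> [] \<longrightarrow> Max (set u) < Max (set v)) \<and> andreM u \<and> andreM v"
      by (rule andre_decomp[OF ml U(3)])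
    ultimately have "andre \<pi>" using U vne pe by simp
    thus "\<pi> \<in> Pset S" using setpi dpi by (simp add: Pset_def perm_iff andreM_def)
  next
    fix \<pi> assume "\<pi> \<in> Pset S"
    hence P: "set \<pi> = S" "distinct \<pi>" "andreM \<pi>" by (auto simp: Pset_def perm_iff)
    have "length \<pi> \<ge> 2" using P c2 distinct_card by fastforce
    hence an: "andre \<pi>" using P by (simp add: andreM_def)
    obtain u v where pe: "\<pi> = u @ m # v" using mS P by (metis split_list)
    have du: "distinct u" and mu: "m \<notin> set u" and mv: "m \<notin> set v" and uv: "set u \<inter> set v = {}"
      using P pe by auto
    have ml: "\<And>x. x \<in> set u \<union> set v \<Longrightarrow> m < x" using P pe mless mu mv by auto
    have "andre (u @ m # v) \<longleftrightarrow> v \<noteq> [] \<and> (u \<noteq> [] \<longrightarrow> Max (set u) < Max (set v)) \<and> andreM u \<and> andreM v"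
      by (rule andre_decomp[OF ml du])
    hence dec: "v \<noteq> [] \<and> (u \<noteq> [] \<longrightarrow> Max (set u) < Max (set v)) \<and> andreM u \<and> andreM v"
      using an pe by simp
    have "M \<notin> set u"
    proof
      assume Mu: "M \<in> set u"
      hence "u \<noteq> []" by auto
      hence "Max (set u) < Max (set v)" using dec by simp
      moreover have "Max (set u) \<ge> M" using Mu by simp
      moreover have "set v \<subseteq> S" using P pe by auto
      hence "Max (set v) \<le> M" using dec Mgr by (auto simp: Max_le_iff)
      ultimately show False by simp
    qed
    hence "(set u, (u, v)) \<in> Q" using memQ P pe dec du mu uv by auto
    moreover have "\<pi> = F (set u, (u, v))" using pe by (simp add: F_def)
    ultimately show "\<pi> \<in> F ` Q" by blast
  qed
  have "AP S = (\<Sum>q\<in>Q. [:0,1:] ^ descents (F q))"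
    unfolding AP_def img[symmetric] by (rule sum.reindex[OF inj, unfolded comp_def])
  also have "\<dots> = (\<Sum>U\<in>Pow (S - {m, M}). \<Sum>(u, v)\<in>Pset U \<times> Pset (S - {m} - U). [:0,1:] ^ descents (u @ m # v))"
  proof -
    have "(\<Sum>q\<in>Q. [:0,1:] ^ descents (F q)) = (\<Sum>q\<in>Q. (case q of (U, u, v) \<Rightarrow> [:0,1:] ^ descents (u @ m # v)))"
      by (rule sum.cong) (auto simp: F_def split: prod.splits)
    also have "\<dots> = (\<Sum>U\<in>Pow (S - {m, M}). \<Sum>(u, v)\<in>Pset U \<times> Pset (S - {m} - U). [:0,1:] ^ descents (u @ m # v))"
      unfolding Q_def by (subst sum.Sigma) (auto simp: finite_Pset intro: finite_subset[OF _ fin])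
    finally show ?thesis .
  qed
  also have "\<dots> = (\<Sum>U\<in>Pow (S - {m, M}). (if U = {} then 1 else [:0,1:]) * AP U * AP (S - {m} - U))"
  proof (rule sum.cong[OF refl])
    fix U assume U: "U \<in> Pow (S - {m, M})"
    have "(\<Sum>(u, v)\<in>Pset U \<times> Pset (S - {m} - U). [:0,1:] ^ descents (u @ m # v))
        = (\<Sum>(u, v)\<in>Pset U \<times> Pset (S - {m} - U). (if U = {} then 1 else [:0,1:]) * ([:0,1:] ^ descents u * [:0,1:] ^ descents v))"
    proof (rule sum.cong[OF refl], clarify)
      fix u v assume uv: "u \<in> Pset U" "v \<in> Pset (S - {m} - U)"
      hence s: "set u = U" "set v = S - {m} - U" by (auto simp: Pset_def perm_iff)
      have "descents (u @ m # v) = descents u + descents v + (if u = [] then 0 else 1)"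
      proof (rule descents_decomp)
        show "\<And>x. x \<in> set v \<Longrightarrow> m < x" using s mless by auto
        show "u \<noteq> [] \<Longrightarrow> m < last u" using s U mless by (metis Diff_iff PowD insertCI last_in_set subsetD)
      qed
      moreover have "(u = []) = (U = {})" using s by auto
      ultimately show "[:0,1:] ^ descents (u @ m # v) = (if U = {} then 1 else [:0,1:]) * ([:0,1:] ^ descents u * [:0,1:] ^ descents v)"
        by (simp add: power_add)
    qed
    also have "\<dots> = (if U = {} then 1 else [:0,1:]) * AP U * AP (S - {m} - U)"
    proof -
      let ?c = "(if U = {} then 1 else [:0,1:]) :: int poly"
      have "AP U * AP (S - {m} - U) = (\<Sum>(u, v)\<in>Pset U \<times> Pset (S - {m} - U). [:0,1:] ^ descents u * [:0,1:] ^ descents v)"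
        unfolding AP_def sum_product sum.cartesian_product by simp
      hence "?c * AP U * AP (S - {m} - U) = (\<Sum>(u, v)\<in>Pset U \<times> Pset (S - {m} - U). ?c * ([:0,1:] ^ descents u * [:0,1:] ^ descents v))"
        by (simp add: mult.assoc sum_distrib_left case_prod_unfold)
      thus ?thesis by simp
    qed
    finally show "(\<Sum>(u, v)\<in>Pset U \<times> Pset (S - {m} - U). [:0,1:] ^ descents (u @ m # v)) = (if U = {} then 1 else [:0,1:]) * AP U * AP (S - {m} - U)" .
  qed
  finally show ?thesis by (simp add: m_def M_def)
qed


lemma sum_pow_card:
  assumes "finite A"
  shows "(\<Sum>U\<in>Pow A. g (card U)) = (\<Sum>j\<le>card A. of_nat (card A choose j) * (g j :: 'a::comm_semiring_1))"
proof -
  have "(\<Sum>U\<in>Pow A. g (card U)) = (\<Sum>j\<le>card A. \<Sum>U\<in>{U \<in> Pow A. card U = j}. g (card U))"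
    by (rule sum.group[symmetric]) (use assms in \<open>auto intro: card_mono\<close>)
  also have "\<dots> = (\<Sum>j\<le>card A. of_nat (card A choose j) * g j)"
  proof (rule sum.cong[OF refl])
    fix j
    have c: "card {U \<in> Pow A. card U = j} = card A choose j"
    proof -
      have "{U \<in> Pow A. card U = j} = {B. B \<subseteq> A \<and> card B = j}" by auto
      thus ?thesis using n_subsets[OF assms] by simp
    qed
    have "(\<Sum>U\<in>{U \<in> Pow A. card U = j}. g (card U)) = (\<Sum>U\<in>{U \<in> Pow A. card U = j}. g j)"
      by (rule sum.cong) auto
    also have "\<dots> = of_nat (card {U \<in> Pow A. card U = j}) * g j" by simp
    finally show "(\<Sum>U\<in>{U \<in> Pow A. card U = j}. g (card U)) = of_nat (card A choose j) * g j" using c by simp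
  qed
  finally show ?thesis .
qed

lemma AP_card: "finite S \<Longrightarrow> AP S = aP (card S)"
proof (induction "card S" arbitrary: S rule: less_induct)
  case less
  show ?case
  proof (cases "card S")
    case 0
    hence "S = {}" using less.prems by simp
    moreover have "Pset {} = {[]}" by (auto simp: Pset_def andreM_def)
    ultimately show ?thesis by (simp add: AP_def descents_Nil)
  next
    case (Suc k0)
    show ?thesis
    proof (cases k0)
      case 0
      then obtain a where "S = {a}" using Suc card_1_singletonE by auto
      moreover have "Pset {a} = {[a]}" by (auto simp: Pset_def andreM_def)
      ultimately show ?thesis by (simp add: AP_def descents_single)
    next
      case (Suc k)
      have cS: "card S = Suc (Suc k)" using Suc \<open>card S = Suc k0\<close> by simp
      define m where "m = Min S"
      define M where "M = Max S"
      have Sne: "S \<noteq> {}" using cS by auto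
      have mS: "m \<in> S" and MS: "M \<in> S" using less.prems Sne by (auto simp: m_def M_def)
      have mM: "m \<noteq> M"
      proof
        assume "m = M"
        hence "\<And>x. x \<in> S \<Longrightarrow> x = m" using less.prems m_def M_def
          by (metis Max_ge Min_le antisym)
        hence "S \<subseteq> {m}" by auto
        hence "card S \<le> 1" using card_mono[of "{m}" S] by simp
        thus False using cS by simp
      qed
      define A where "A = S - {m, M}"
      have fA: "finite A" using less.prems by (simp add: A_def)
      have cA: "card A = k" using cS mS MS mM less.prems by (simp add: A_def card_Diff_subset)
      have "AP S = (\<Sum>U\<in>Pow A. (if U = {} then 1 else [:0,1:]) * AP U * AP (S - {m} - U))"
        using AP_rec[OF less.prems] cS by (simp add: A_def m_def M_def)
      also have "\<dots> = (\<Sum>U\<in>Pow A. (\<lambda>j. (if j = 0 then 1 else [:0,1:]) * aP j * aP (Suc k - j)) (card U))"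
      proof (rule sum.cong[OF refl])
        fix U assume U: "U \<in> Pow A"
        have fU: "finite U" using U fA finite_subset by auto
        have cU: "card U \<le> k" using U fA cA card_mono by auto
        have "AP U = aP (card U)" using less.hyps[of U] fU cU cS by simp
        moreover have cV: "card (S - {m} - U) = Suc k - card U"
        proof -
          have "U \<subseteq> S - {m}" using U by (auto simp: A_def)
          hence "card (S - {m} - U) = card (S - {m}) - card U" using less.prems fU by (simp add: card_Diff_subset)
          also have "card (S - {m}) = Suc k" using cS mS less.prems by simp
          finally show ?thesis .
        qed
        moreover have "AP (S - {m} - U) = aP (card (S - {m} - U))"
          using less.hyps[of "S - {m} - U"] less.prems cV cS by simp
        moreover have "(U = {}) = (card U = 0)" using fU by simp
        ultimately show "(if U = {} then 1 else [:0,1:]) * AP U * AP (S - {m} - U) = (\<lambda>j. (if j = 0 then 1 else [:0,1:]) * aP j * aP (Suc k - j)) (card U)"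
          by simp
      qed
      also have "\<dots> = (\<Sum>j\<le>k. of_nat (k choose j) * ((if j = 0 then 1 else [:0,1:]) * aP j * aP (Suc k - j)))"
        using sum_pow_card[OF fA] cA by simp
      also have "\<dots> = aP (card S)" using cS by (simp add: mult.assoc)
      finally show ?thesis .
    qed
  qed
qed

lemma coeff_X_power: "coeff ([:0,1:] ^ j :: int poly) k = (if j = k then 1 else 0)"
proof -
  have "[:0,1:] ^ j = (monom 1 j :: int poly)" by (simp add: monom_altdef)
  thus ?thesis by (simp add: coeff_monom)
qed

lemma d_coeff:
  assumes "n \<ge> 2"
  shows "int (d n k) = coeff (aP n) k"
proof -
  have eq: "Pset {1..n} = {\<pi> \<in> permutations_of_set {1..n}. andre \<pi>}"
  proof -
    have "\<And>\<pi>. \<pi> \<in> permutations_of_set {1..n} \<Longrightarrow> length \<pi> = n"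
      by (metis card_atLeastAtMost diff_Suc_1 distinct_card perm_iff)
    thus ?thesis using assms unfolding Pset_def andreM_def by auto
  qed
  have "coeff (aP n) k = coeff (AP {1..n}) k" using AP_card[of "{1..n}"] by simp
  also have "\<dots> = (\<Sum>\<pi>\<in>Pset {1..n}. if descents \<pi> = k then 1 else 0)"
    by (simp add: AP_def coeff_sum coeff_X_power)
  also have "\<dots> = of_nat (card {\<pi> \<in> Pset {1..n}. descents \<pi> = k})"
    using finite_Pset[of "{1..n}"] by (simp add: sum.If_cases Int_def)
  also have "{\<pi> \<in> Pset {1..n}. descents \<pi> = k} = {\<pi> \<in> permutations_of_set {1..n}. andre \<pi> \<and> descents \<pi> = k}"
    using eq by auto
  finally show ?thesis by (simp add: d_def)
qed


lemma nodes_Leaf[simp]: "nodes Leaf = {}" by (simp add: nodes_def)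
lemma nodes_Node: "nodes (Node l a r) = insert (Node l a r) (nodes l \<union> nodes r)"
  by (auto simp: nodes_def)

lemma value_in_nodes: "s \<in> nodes t \<Longrightarrow> value s \<in> set_tree t"
  by (cases s) (auto simp: nodes_def intro: in_set_tree_if)

lemma Node_notin_nodes_l: "Node l a r \<notin> nodes l"
  using size_subtrees[of "Node l a r" l] by (auto simp: nodes_def)
lemma Node_notin_nodes_r: "Node l a r \<notin> nodes r"
  using size_subtrees[of "Node l a r" r] by (auto simp: nodes_def)

lemma finite_nodes: "finite (nodes t)"
proof -
  have "finite (subtrees t)" by (induction t) auto
  thus ?thesis by (simp add: nodes_def)
qed

definition rok :: "nat tree \<Rightarrow> bool" where
  "rok s = ((is_min_node s \<or> is_max_node s) \<and> (is_inner s \<longrightarrow>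
        right s \<noteq> Leaf \<and>
        (is_min_node s \<longrightarrow> Max (set_tree s) \<in> set_tree (right s)) \<and>
        (is_max_node s \<longrightarrow> Min (set_tree s) \<in> set_tree (right s))))"

definition tmin :: "nat tree \<Rightarrow> bool" where
  "tmin s = (left s \<noteq> Leaf \<and> right s \<noteq> Leaf \<longrightarrow> is_min_node s)"

lemma HR_tree_iff: "HR_tree t \<longleftrightarrow> (\<forall>s\<in>nodes t. rok s)"
  unfolding HR_tree_def min_max_tree_def rok_def by blast

fun oc :: "nat tree \<Rightarrow> nat" where
  "oc Leaf = 0"
| "oc (Node l a r) = oc l + oc r + (if one_child (Node l a r) then 1 else 0)"

fun ocl :: "nat tree \<Rightarrow> nat list" where
  "ocl Leaf = []"
| "ocl (Node l a r) = ocl l @ (if one_child (Node l a r) then [a] else []) @ ocl r"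

lemma length_ocl: "length (ocl t) = oc t"
  by (induction t) auto

lemma oc_parity: "t \<noteq> Leaf \<Longrightarrow> odd (oc t + size t)"
proof (induction t)
  case Leaf thus ?case by simp
next
  case (Node l a r)
  show ?case
  proof (cases "l = Leaf")
    case True
    thus ?thesis using Node by (cases "r = Leaf") (auto simp: one_child_def)
  next
    case False
    thus ?thesis using Node by (cases "r = Leaf") (auto simp: one_child_def)
  qed
qed

fun good :: "bool \<Rightarrow> nat tree \<Rightarrow> bool" where
  "good b Leaf = True"
| "good b (Node l a r) = (good b l \<and>
     (one_child (Node l a r) \<and> is_min_node (Node l a r) \<longrightarrow> (b \<noteq> odd (oc l))) \<and>
     good ((b \<noteq> odd (oc l)) \<noteq> one_child (Node l a r)) r)"

lemma ocl_filter:
  "distinct (inorder t) \<Longrightarrow> filter (\<lambda>a. \<exists>s\<in>nodes t. one_child s \<and> value s = a) (inorder t) = ocl t"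
proof (induction t)
  case Leaf thus ?case by simp
next
  case (Node l a r)
  let ?t = "Node l a r"
  have d: "distinct (inorder l)" "distinct (inorder r)" "a \<notin> set_tree l" "a \<notin> set_tree r"
    "set_tree l \<inter> set_tree r = {}" using Node.prems by auto
  have vl: "\<And>s. s \<in> nodes l \<Longrightarrow> value s \<in> set_tree l" by (rule value_in_nodes)
  have vr: "\<And>s. s \<in> nodes r \<Longrightarrow> value s \<in> set_tree r" by (rule value_in_nodes)
  have fl: "filter (\<lambda>x. \<exists>s\<in>nodes ?t. one_child s \<and> value s = x) (inorder l)
      = filter (\<lambda>x. \<exists>s\<in>nodes l. one_child s \<and> value s = x) (inorder l)"
  proof (rule filter_cong[OF refl])
    fix x assume "x \<in> set (inorder l)"
    hence x: "x \<in> set_tree l" by simp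
    show "(\<exists>s\<in>nodes ?t. one_child s \<and> value s = x) = (\<exists>s\<in>nodes l. one_child s \<and> value s = x)"
    proof
      assume "\<exists>s\<in>nodes ?t. one_child s \<and> value s = x"
      then obtain s where s: "s \<in> nodes ?t" "one_child s" "value s = x" by blast
      have "s \<noteq> ?t" using s x d by auto
      moreover have "s \<notin> nodes r" using s x d vr by blast
      ultimately have "s \<in> nodes l" using s(1) unfolding nodes_Node by blast
      thus "\<exists>s\<in>nodes l. one_child s \<and> value s = x" using s by blast
    qed (auto simp: nodes_Node)
  qed
  have fr: "filter (\<lambda>x. \<exists>s\<in>nodes ?t. one_child s \<and> value s = x) (inorder r)
      = filter (\<lambda>x. \<exists>s\<in>nodes r. one_child s \<and> value s = x) (inorder r)"
  proof (rule filter_cong[OF refl])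
    fix x assume "x \<in> set (inorder r)"
    hence x: "x \<in> set_tree r" by simp
    show "(\<exists>s\<in>nodes ?t. one_child s \<and> value s = x) = (\<exists>s\<in>nodes r. one_child s \<and> value s = x)"
    proof
      assume "\<exists>s\<in>nodes ?t. one_child s \<and> value s = x"
      then obtain s where s: "s \<in> nodes ?t" "one_child s" "value s = x" by blast
      have "s \<noteq> ?t" using s x d by auto
      moreover have "s \<notin> nodes l" using s x d vl by blast
      ultimately have "s \<in> nodes r" using s(1) unfolding nodes_Node by blast
      thus "\<exists>s\<in>nodes r. one_child s \<and> value s = x" using s by blast
    qed (auto simp: nodes_Node)
  qed
  have fa: "(\<exists>s\<in>nodes ?t. one_child s \<and> value s = a) = one_child ?t"
  proof
    assume "\<exists>s\<in>nodes ?t. one_child s \<and> value s = a"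
    then obtain s where s: "s \<in> nodes ?t" "one_child s" "value s = a" by blast
    have "s \<notin> nodes l" using s d vl by blast
    moreover have "s \<notin> nodes r" using s d vr by blast
    ultimately have "s = ?t" using s(1) unfolding nodes_Node by blast
    thus "one_child ?t" using s by simp
  qed (auto simp: nodes_Node)
  show ?case using fl fr fa Node.IH d by simp
qed

lemma distinct_ocl: "distinct (inorder t) \<Longrightarrow> distinct (ocl t)"
  by (subst ocl_filter[symmetric]) auto

definition evpos :: "nat list \<Rightarrow> nat \<Rightarrow> bool" where
  "evpos L a = (\<exists>k. 1 \<le> k \<and> k \<le> length L \<and> even k \<and> L ! (k - 1) = a)"

lemma evpos_nth: "distinct L \<Longrightarrow> j < length L \<Longrightarrow> evpos L (L ! j) \<longleftrightarrow> odd j"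
proof
  assume "distinct L" "j < length L" "evpos L (L ! j)"
  then obtain k where k: "1 \<le> k" "k \<le> length L" "even k" "L ! (k - 1) = L ! j" by (auto simp: evpos_def)
  hence "k - 1 = j" using \<open>distinct L\<close> \<open>j < length L\<close> nth_eq_iff_index_eq by fastforce
  hence "k = Suc j" using k(1) by simp
  thus "odd j" using k(3) by simp
next
  assume "distinct L" "j < length L" "odd j"
  thus "evpos L (L ! j)" unfolding evpos_def by (intro exI[of _ "Suc j"]) auto
qed

definition C :: "nat tree \<Rightarrow> bool" where
  "C s = (is_min_node s \<and> one_child s)"

lemma good_iff_gen:
  "distinct (pre @ ocl t @ suf) \<Longrightarrow>
   (\<forall>s\<in>nodes t. C s \<longrightarrow> evpos (pre @ ocl t @ suf) (value s)) \<longleftrightarrow> good (odd (length pre)) t"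
proof (induction t arbitrary: pre suf)
  case Leaf thus ?case by simp
next
  case (Node l a r)
  let ?t = "Node l a r"
  let ?o = "if one_child ?t then [a] else []"
  have L: "pre @ ocl ?t @ suf = pre @ ocl l @ (?o @ ocl r @ suf)" by simp
  have L2: "pre @ ocl ?t @ suf = (pre @ ocl l @ ?o) @ ocl r @ suf" by simp
  have IHl: "(\<forall>s\<in>nodes l. C s \<longrightarrow> evpos (pre @ ocl ?t @ suf) (value s)) \<longleftrightarrow> good (odd (length pre)) l"
  proof -
    have dl: "distinct (pre @ ocl l @ (?o @ ocl r @ suf))" using Node.prems unfolding L .
    show ?thesis unfolding L by (rule Node.IH(1)[OF dl])
  qed
  have IHr: "(\<forall>s\<in>nodes r. C s \<longrightarrow> evpos (pre @ ocl ?t @ suf) (value s)) \<longleftrightarrow> good (odd (length (pre @ ocl l @ ?o))) r"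
    using Node.IH(2)[of "pre @ ocl l @ ?o" suf] Node.prems L2 by (simp only:)
  have root: "C ?t \<longrightarrow> evpos (pre @ ocl ?t @ suf) a \<longleftrightarrow> (C ?t \<longrightarrow> (odd (length pre) \<noteq> odd (oc l)))"
  proof (cases "C ?t")
    case True
    hence oc1: "one_child ?t" by (simp add: C_def)
    have "(pre @ ocl ?t @ suf) ! (length pre + length (ocl l)) = a" using oc1 by (simp add: nth_append)
    moreover have "length pre + length (ocl l) < length (pre @ ocl ?t @ suf)" using oc1 by simp
    ultimately have "evpos (pre @ ocl ?t @ suf) a \<longleftrightarrow> odd (length pre + length (ocl l))"
      using evpos_nth[OF Node.prems] by metis
    thus ?thesis using True by (simp add: length_ocl)
  qed simp
  have par: "odd (length (pre @ ocl l @ ?o)) = ((odd (length pre) \<noteq> odd (oc l)) \<noteq> one_child ?t)"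
    by (simp add: length_ocl)
  let ?P = "\<lambda>s. C s \<longrightarrow> evpos (pre @ ocl ?t @ suf) (value s)"
  have split: "(\<forall>s\<in>nodes ?t. ?P s) \<longleftrightarrow> ?P ?t \<and> (\<forall>s\<in>nodes l. ?P s) \<and> (\<forall>s\<in>nodes r. ?P s)"
    unfolding nodes_Node by blast
  have g: "good (odd (length pre)) ?t \<longleftrightarrow> good (odd (length pre)) l \<and> (C ?t \<longrightarrow> (odd (length pre) \<noteq> odd (oc l)))
      \<and> good ((odd (length pre) \<noteq> odd (oc l)) \<noteq> one_child ?t) r"
    by (simp add: C_def conj_commute)
  have "?P ?t \<longleftrightarrow> (C ?t \<longrightarrow> (odd (length pre) \<noteq> odd (oc l)))" using root by simp
  thus ?case unfolding split g using IHl IHr[unfolded par] by blast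
qed


definition TS :: "nat set \<Rightarrow> bool \<Rightarrow> nat tree set" where
  "TS S b = {t. distinct (inorder t) \<and> set_tree t = S \<and> (\<forall>s\<in>nodes t. rok s \<and> tmin s) \<and> good b t}"

lemma HR_tilde_TS: "HR_tilde n = TS {1..n} False"
proof (intro set_eqI iffI)
  fix t assume "t \<in> HR_tilde n"
  hence t: "HR_tree t" "distinct (inorder t)" "set_tree t = {1..n}"
    "\<forall>s\<in>nodes t. tmin s" "\<forall>s\<in>nodes t. C s \<longrightarrow> evpos (ocl t) (value s)"
    by (auto simp: HR_tilde_def HR_def tmin_def C_def even_one_child_def evpos_def one_child_list_def ocl_filter)
  have "good False t" using good_iff_gen[of "[]" t "[]"] t distinct_ocl by simp
  thus "t \<in> TS {1..n} False" using t by (auto simp: TS_def HR_tree_iff)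
next
  fix t assume "t \<in> TS {1..n} False"
  hence t: "distinct (inorder t)" "set_tree t = {1..n}" "\<forall>s\<in>nodes t. rok s \<and> tmin s" "good False t"
    by (auto simp: TS_def)
  have "\<forall>s\<in>nodes t. C s \<longrightarrow> evpos (ocl t) (value s)" using good_iff_gen[of "[]" t "[]"] t distinct_ocl by simp
  thus "t \<in> HR_tilde n" using t
    by (auto simp: HR_tilde_def HR_def tmin_def C_def even_one_child_def evpos_def one_child_list_def ocl_filter HR_tree_iff)
qed

lemma min_count_Leaf: "min_count Leaf = 0" by (simp add: min_count_def)

lemma min_count_Node:
  assumes d: "distinct (inorder (Node l a r))"
  shows "min_count (Node l a r) = min_count l + min_count r
     + (if is_inner (Node l a r) \<and> is_min_node (Node l a r) then 1 else 0)"
proof -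
  let ?t = "Node l a r"
  let ?P = "\<lambda>s. is_inner s \<and> is_min_node s"
  have disj: "nodes l \<inter> nodes r = {}"
  proof -
    have "set_tree l \<inter> set_tree r = {}" using d by auto
    thus ?thesis using value_in_nodes[of _ l] value_in_nodes[of _ r] by blast
  qed
  have eq: "{s \<in> nodes ?t. ?P s} = (if ?P ?t then {?t} else {}) \<union> ({s \<in> nodes l. ?P s} \<union> {s \<in> nodes r. ?P s})"
    unfolding nodes_Node by auto
  have fin: "finite {s \<in> nodes l. ?P s}" "finite {s \<in> nodes r. ?P s}" using finite_nodes by auto
  have d2: "{s \<in> nodes l. ?P s} \<inter> {s \<in> nodes r. ?P s} = {}" using disj by auto
  have d1: "?t \<notin> {s \<in> nodes l. ?P s} \<union> {s \<in> nodes r. ?P s}" using Node_notin_nodes_l Node_notin_nodes_r by auto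
  have "card ({s \<in> nodes l. ?P s} \<union> {s \<in> nodes r. ?P s}) = min_count l + min_count r"
    using card_Un_disjoint[OF fin d2] by (simp add: min_count_def)
  moreover have "card {s \<in> nodes ?t. ?P s} = (if ?P ?t then 1 else 0) + card ({s \<in> nodes l. ?P s} \<union> {s \<in> nodes r. ?P s})"
    unfolding eq using d1 fin by (simp add: card_insert_if)
  ultimately show ?thesis by (simp add: min_count_def)
qed

lemma size_card: "distinct (inorder t) \<Longrightarrow> size t = card (set_tree t)"
  by (metis distinct_card length_inorder set_inorder)

lemma TS_sub_l: "Node l a r \<in> TS S b \<Longrightarrow> l \<in> TS (set_tree l) b"
  by (auto simp: TS_def nodes_Node)


lemma TS_Node_iff:
  "Node l a r \<in> TS S b \<longleftrightarrow> distinct (inorder (Node l a r)) \<and> set_tree (Node l a r) = S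
     \<and> rok (Node l a r) \<and> tmin (Node l a r)
     \<and> l \<in> TS (set_tree l) b \<and> r \<in> TS (set_tree r) ((b \<noteq> odd (oc l)) \<noteq> one_child (Node l a r))
     \<and> (C (Node l a r) \<longrightarrow> (b \<noteq> odd (oc l)))"
  unfolding TS_def C_def by (auto simp: nodes_Node)

context
  fixes S :: "nat set" and b :: bool
  assumes fin: "finite S" and c2: "card S \<ge> 2"
begin

definition "mm = Min S"
definition "MM = Max S"

lemma Sne: "S \<noteq> {}" using c2 by auto
lemma mS: "mm \<in> S" using fin Sne by (simp add: mm_def)
lemma MS: "MM \<in> S" using fin Sne by (simp add: MM_def)
lemma mle: "x \<in> S \<Longrightarrow> mm \<le> x" using fin by (simp add: mm_def)
lemma Mge: "x \<in> S \<Longrightarrow> x \<le> MM" using fin by (simp add: MM_def)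
lemma mM: "mm < MM"
proof -
  have "\<not> card S \<le> Suc 0" using c2 by simp
  then obtain x y where "x \<in> S" "y \<in> S" "x \<noteq> y" using card_le_Suc0_iff_eq[OF fin] by blast
  hence "mm \<le> x" "x \<le> MM" "mm \<le> y" "y \<le> MM" "x \<noteq> y" using mle Mge by auto
  thus ?thesis by arith
qed

definition "A1 = (\<lambda>r. Node Leaf MM r) ` TS (S - {MM}) (\<not> b)"
definition "A2 = (if b then (\<lambda>r. Node Leaf mm r) ` TS (S - {mm}) False else {})"
definition "Q3 = (SIGMA U:{U \<in> Pow (S - {mm, MM}). U \<noteq> {}}. TS U b \<times> TS (S - {mm} - U) (b \<noteq> even (card U)))"
definition "A3 = (\<lambda>(U, l, r). Node l mm r) ` Q3"

lemma Min_S: "Min S = mm" by (simp add: mm_def)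
lemma Max_S: "Max S = MM" by (simp add: MM_def)

lemma TS_decomp: "TS S b = A1 \<union> A2 \<union> A3"
proof (intro set_eqI iffI)
  fix t assume tS: "t \<in> TS S b"
  then obtain l a r where t: "t = Node l a r" using Sne by (cases t) (auto simp: TS_def)
  have T: "distinct (inorder t)" "set_tree t = S" "rok t" "tmin t" "l \<in> TS (set_tree l) b"
    "r \<in> TS (set_tree r) ((b \<noteq> odd (oc l)) \<noteq> one_child t)" "C t \<longrightarrow> (b \<noteq> odd (oc l))"
    using tS TS_Node_iff[of l a r S b] t by auto
  have dj: "a \<notin> set_tree l" "a \<notin> set_tree r" "set_tree l \<inter> set_tree r = {}" using T(1) t by auto
  have inner: "is_inner t"
  proof (rule ccontr)
    assume "\<not> is_inner t"
    hence "l = Leaf" "r = Leaf" using t by (auto simp: is_inner_def)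
    hence "S = {a}" using T(2) t by simp
    thus False using c2 by simp
  qed
  hence rne: "r \<noteq> Leaf" using T(3) t by (auto simp: rok_def)
  have mmx: "is_min_node t \<or> is_max_node t" using T(3) by (simp add: rok_def)
  show "t \<in> A1 \<union> A2 \<union> A3"
  proof (cases "is_min_node t")
    case False
    hence mx: "is_max_node t" using mmx by simp
    hence aM: "a = MM" using T(2) t by (simp add: is_max_node_def Max_S)
    have "\<not> (l \<noteq> Leaf \<and> r \<noteq> Leaf)" using T(4) False t by (auto simp: tmin_def)
    hence lL: "l = Leaf" using rne by simp
    have "set_tree r = S - {MM}" using T(2) t lL aM dj by auto
    moreover have "(b \<noteq> odd (oc l)) \<noteq> one_child t = (\<not> b)" using lL rne t by (simp add: one_child_def)
    ultimately have "r \<in> TS (S - {MM}) (\<not> b)" using T(6) by simp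
    thus ?thesis using t lL aM by (auto simp: A1_def)
  next
    case True
    hence am: "a = mm" using T(2) t by (simp add: is_min_node_def Min_S)
    have MMr: "MM \<in> set_tree r" using T(3) True inner T(2) t by (simp add: rok_def Max_S)
    show ?thesis
    proof (cases "l = Leaf")
      case True
      have oc1: "one_child t" using True rne t by (simp add: one_child_def)
      hence bT: "b" using T(7) \<open>is_min_node t\<close> True by (simp add: C_def)
      have "set_tree r = S - {mm}" using T(2) t True am dj by auto
      hence "r \<in> TS (S - {mm}) False" using T(6) True oc1 bT by simp
      hence "t \<in> (\<lambda>r. Node Leaf mm r) ` TS (S - {mm}) False" using t True am by blast
      hence "t \<in> A2" unfolding A2_def using bT by simp
      thus ?thesis by blast
    next
      case False
      let ?U = "set_tree l"
      have oc0: "\<not> one_child t" using False rne t by (simp add: one_child_def)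
      have U: "?U \<subseteq> S - {mm, MM}" "?U \<noteq> {}" using T(2) t am dj MMr False by auto
      have sr: "set_tree r = S - {mm} - ?U" using T(2) t am dj by auto
      have "odd (oc l + size l)" using oc_parity False by simp
      moreover have "size l = card ?U" using T(1) t size_card[of l] by simp
      ultimately have par: "odd (oc l) = even (card ?U)" by simp
      have "r \<in> TS (S - {mm} - ?U) (b \<noteq> even (card ?U))" using T(6) sr oc0 par by simp
      hence "(?U, l, r) \<in> Q3" using U T(5) by (simp add: Q3_def)
      thus ?thesis using t am by (force simp: A3_def)
    qed
  qed
next
  fix t assume "t \<in> A1 \<union> A2 \<union> A3"
  then consider (a1) "t \<in> A1" | (a2) "t \<in> A2" | (a3) "t \<in> A3" by blast
  thus "t \<in> TS S b"
  proof cases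
    case a1
    then obtain r where t: "t = Node Leaf MM r" and r: "r \<in> TS (S - {MM}) (\<not> b)" by (auto simp: A1_def)
    have R: "distinct (inorder r)" "set_tree r = S - {MM}" using r by (auto simp: TS_def)
    have st: "set_tree t = S" using R t MS by auto
    have "mm \<in> set_tree r" using R mS mM by simp
    hence rne: "r \<noteq> Leaf" by (cases r) auto
    have nmin: "\<not> is_min_node t" using st t mM by (simp add: is_min_node_def Min_S)
    have "is_max_node t" using st t by (simp add: is_max_node_def Max_S)
    moreover have "Min (set_tree t) \<in> set_tree r" using st R mS mM by (simp add: Min_S)
    ultimately have "rok t" using rne nmin t by (simp add: rok_def)
    moreover have "tmin t" using t by (simp add: tmin_def)
    moreover have "distinct (inorder t)" using R t by simp
    moreover have e: "((b \<noteq> odd (oc Leaf)) \<noteq> one_child t) = (\<not> b)" using rne t by (simp add: one_child_def)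
    moreover have "Leaf \<in> TS (set_tree Leaf) b" by (simp add: TS_def)
    moreover have "C t \<longrightarrow> b \<noteq> odd (oc Leaf)" using nmin by (simp add: C_def)
    moreover have "r \<in> TS (set_tree r) ((b \<noteq> odd (oc Leaf)) \<noteq> one_child t)" using r R unfolding e by simp
    moreover note st
    ultimately show ?thesis unfolding t TS_Node_iff by blast
  next
    case a2
    then obtain r where t: "t = Node Leaf mm r" and r: "r \<in> TS (S - {mm}) False" and bT: b by (auto simp: A2_def split: if_splits)
    have R: "distinct (inorder r)" "set_tree r = S - {mm}" using r by (auto simp: TS_def)
    have st: "set_tree t = S" using R t mS by auto
    have "MM \<in> set_tree r" using R MS mM by simp
    hence rne: "r \<noteq> Leaf" by (cases r) auto
    have mn: "is_min_node t" using st t by (simp add: is_min_node_def Min_S)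
    have nmax: "\<not> is_max_node t" using st t mM by (simp add: is_max_node_def Max_S)
    have "Max (set_tree t) \<in> set_tree r" using st R MS mM by (simp add: Max_S)
    hence "rok t" using rne mn nmax t by (simp add: rok_def)
    moreover have "tmin t" using t by (simp add: tmin_def)
    moreover have "distinct (inorder t)" using R t by simp
    moreover have e: "((b \<noteq> odd (oc Leaf)) \<noteq> one_child t) = False" using rne t bT by (simp add: one_child_def)
    moreover have "Leaf \<in> TS (set_tree Leaf) b" by (simp add: TS_def)
    moreover have "C t \<longrightarrow> b \<noteq> odd (oc Leaf)" using bT by simp
    moreover have "r \<in> TS (set_tree r) ((b \<noteq> odd (oc Leaf)) \<noteq> one_child t)" using r R unfolding e by simp
    moreover note st
    ultimately show ?thesis unfolding t TS_Node_iff by blast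
  next
    case a3
    then obtain U l r where t: "t = Node l mm r" and q: "(U, l, r) \<in> Q3" by (auto simp: A3_def)
    have U: "U \<subseteq> S - {mm, MM}" "U \<noteq> {}" "l \<in> TS U b" "r \<in> TS (S - {mm} - U) (b \<noteq> even (card U))"
      using q by (auto simp: Q3_def)
    have L: "distinct (inorder l)" "set_tree l = U" using U by (auto simp: TS_def)
    have R: "distinct (inorder r)" "set_tree r = S - {mm} - U" using U by (auto simp: TS_def)
    have st: "set_tree t = S" using L R t mS U by auto
    have lne: "l \<noteq> Leaf" using L U by (cases l) auto
    have MMr: "MM \<in> set_tree r" using R U MS mM by auto
    hence rne: "r \<noteq> Leaf" by (cases r) auto
    have mn: "is_min_node t" using st t by (simp add: is_min_node_def Min_S)
    have nmax: "\<not> is_max_node t" using st t mM by (simp add: is_max_node_def Max_S)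
    have "rok t" using rne mn nmax t MMr st by (simp add: rok_def Max_S)
    moreover have "tmin t" using mn by (simp add: tmin_def)
    moreover have "distinct (inorder t)" using L R t U by auto
    moreover have oc0: "\<not> one_child t" using lne rne t by (simp add: one_child_def)
    moreover have par: "odd (oc l) = even (card U)"
    proof -
      have "odd (oc l + size l)" using oc_parity lne by simp
      moreover have "size l = card U" using L size_card[of l] by simp
      ultimately show ?thesis by simp
    qed
    moreover have "C t \<longrightarrow> b \<noteq> odd (oc l)" using oc0 by (simp add: C_def)
    moreover have "l \<in> TS (set_tree l) b" using U L by simp
    moreover have "r \<in> TS (set_tree r) ((b \<noteq> odd (oc l)) \<noteq> one_child t)" using U R oc0 par by simp
    moreover note st
    ultimately show ?thesis unfolding t TS_Node_iff by blast
  qed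
qed

end


definition TP :: "nat set \<Rightarrow> bool \<Rightarrow> int poly" where
  "TP S b = (\<Sum>t\<in>TS S b. [:0,1:] ^ min_count t)"

context
  fixes S :: "nat set" and b :: bool
  assumes fin: "finite S" and c2: "card S \<ge> 2"
begin

lemma TS_elt: "t \<in> TS T c \<Longrightarrow> distinct (inorder t) \<and> set_tree t = T"
  by (simp add: TS_def)

lemma TP_rec:
  assumes subfin: "\<And>T c. T \<subseteq> S \<Longrightarrow> T \<noteq> S \<Longrightarrow> finite (TS T c)"
  shows "finite (TS S b) \<and> TP S b = TP (S - {MM S}) (\<not> b) + (if b then [:0,1:] * TP (S - {mm S}) False else 0)
     + [:0,1:] * (\<Sum>U\<in>{U \<in> Pow (S - {mm S, MM S}). U \<noteq> {}}. TP U b * TP (S - {mm S} - U) (b \<noteq> even (card U)))"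
proof -
  let ?m = "mm S" and ?M = "MM S"
  have mS: "?m \<in> S" and MS: "?M \<in> S" and mM: "?m < ?M" using mS MS mM fin c2 by auto
  have Min_S: "Min S = ?m" and Max_S: "Max S = ?M" using Min_S Max_S fin c2 by auto
  have f1: "finite (TS (S - {?M}) (\<not> b))" using MS by (intro subfin) auto
  have f2: "finite (TS (S - {?m}) False)" using mS by (intro subfin) auto
  have fQ: "finite (Q3 S b)"
  proof -
    have fP: "finite {U \<in> Pow (S - {?m, ?M}). U \<noteq> {}}" using fin by simp
    have fB: "\<And>U. U \<in> {U \<in> Pow (S - {?m, ?M}). U \<noteq> {}} \<Longrightarrow> finite (TS U b \<times> TS (S - {?m} - U) (b \<noteq> even (card U)))"
      using mS MS by (intro finite_cartesian_product subfin) auto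
    show ?thesis unfolding Q3_def[OF fin c2] by (rule finite_SigmaI[OF fP fB])
  qed
  have fA1: "finite (A1 S b)" using f1 by (simp add: A1_def[OF fin c2])
  have fA2: "finite (A2 S b)" using f2 by (simp add: A2_def[OF fin c2])
  have fA3: "finite (A3 S b)" using fQ by (simp add: A3_def[OF fin c2])
  have dec: "TS S b = A1 S b \<union> A2 S b \<union> A3 S b" using TS_decomp fin c2 by blast
  have d12: "A1 S b \<inter> A2 S b = {}" using mM by (auto simp: A1_def[OF fin c2] A2_def[OF fin c2])
  have d3: "(A1 S b \<union> A2 S b) \<inter> A3 S b = {}"
  proof -
    have "\<And>U l r. (U, l, r) \<in> Q3 S b \<Longrightarrow> l \<noteq> Leaf"
    proof -
      fix U l r assume "(U, l, r) \<in> Q3 S b"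
      hence "set_tree l = U" "U \<noteq> {}" by (auto simp: Q3_def[OF fin c2] TS_def)
      thus "l \<noteq> Leaf" by (cases l) auto
    qed
    hence "\<And>t. t \<in> A3 S b \<Longrightarrow> value t = ?m \<and> left t \<noteq> Leaf" by (auto simp: A3_def[OF fin c2])
    moreover have "\<And>t. t \<in> A1 S b \<Longrightarrow> value t = ?M" by (auto simp: A1_def[OF fin c2])
    moreover have "\<And>t. t \<in> A2 S b \<Longrightarrow> left t = Leaf" by (auto simp: A2_def[OF fin c2] split: if_splits)
    ultimately show ?thesis using mM by fastforce
  qed
  have s1: "(\<Sum>t\<in>A1 S b. [:0,1:] ^ min_count t) = TP (S - {?M}) (\<not> b)"
  proof -
    have "(\<Sum>t\<in>A1 S b. [:0,1:] ^ min_count t) = (\<Sum>r\<in>TS (S - {?M}) (\<not> b). [:0,1:] ^ min_count (Node Leaf ?M r))"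
      unfolding A1_def[OF fin c2] by (simp add: sum.reindex inj_on_def)
    also have "\<dots> = TP (S - {?M}) (\<not> b)" unfolding TP_def
    proof (rule sum.cong[OF refl])
      fix r assume r: "r \<in> TS (S - {?M}) (\<not> b)"
      hence R: "distinct (inorder r)" "set_tree r = S - {?M}" using TS_elt by auto
      have st: "set_tree (Node Leaf ?M r) = S" using R MS by auto
      have "\<not> is_min_node (Node Leaf ?M r)" using st mM by (simp add: is_min_node_def Min_S)
      moreover have "distinct (inorder (Node Leaf ?M r))" using R by simp
      ultimately have "min_count (Node Leaf ?M r) = min_count r" using min_count_Node by (simp add: min_count_Leaf)
      thus "[:0,1:] ^ min_count (Node Leaf ?M r) = [:0,1:] ^ min_count r" by simp
    qed
    finally show ?thesis .
  qed
  have s2: "(\<Sum>t\<in>A2 S b. [:0,1:] ^ min_count t) = (if b then [:0,1:] * TP (S - {?m}) False else 0)"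
  proof (cases b)
    case False thus ?thesis by (simp add: A2_def[OF fin c2])
  next
    case True
    have "(\<Sum>t\<in>A2 S b. [:0,1:] ^ min_count t) = (\<Sum>r\<in>TS (S - {?m}) False. [:0,1:] ^ min_count (Node Leaf ?m r))"
      unfolding A2_def[OF fin c2] using True by (simp add: sum.reindex inj_on_def)
    also have "\<dots> = [:0,1:] * TP (S - {?m}) False" unfolding TP_def sum_distrib_left
    proof (rule sum.cong[OF refl])
      fix r assume r: "r \<in> TS (S - {?m}) False"
      hence R: "distinct (inorder r)" "set_tree r = S - {?m}" using TS_elt by auto
      have st: "set_tree (Node Leaf ?m r) = S" using R mS by auto
      have "?M \<in> set_tree r" using R MS mM by simp
      hence "r \<noteq> Leaf" by (cases r) auto
      hence "is_inner (Node Leaf ?m r)" by (simp add: is_inner_def)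
      moreover have "is_min_node (Node Leaf ?m r)" using st by (simp add: is_min_node_def Min_S)
      moreover have "distinct (inorder (Node Leaf ?m r))" using R by simp
      ultimately have "min_count (Node Leaf ?m r) = Suc (min_count r)" using min_count_Node by (simp add: min_count_Leaf)
      thus "[:0,1:] ^ min_count (Node Leaf ?m r) = [:0,1:] * [:0,1:] ^ min_count r" by simp
    qed
    finally show ?thesis using True by simp
  qed
  have s3: "(\<Sum>t\<in>A3 S b. [:0,1:] ^ min_count t)
      = [:0,1:] * (\<Sum>U\<in>{U \<in> Pow (S - {?m, ?M}). U \<noteq> {}}. TP U b * TP (S - {?m} - U) (b \<noteq> even (card U)))"
  proof -
    have inj: "inj_on (\<lambda>(U, l, r). Node l ?m r) (Q3 S b)"
    proof (rule inj_onI)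
      fix x y assume x: "x \<in> Q3 S b" and y: "y \<in> Q3 S b"
        and e: "(\<lambda>(U, l, r). Node l ?m r) x = (\<lambda>(U, l, r). Node l ?m r) y"
      obtain U l r where xv: "x = (U, l, r)" by (cases x) auto
      obtain U' l' r' where yv: "y = (U', l', r')" by (cases y) auto
      have "l = l'" "r = r'" using e xv yv by auto
      moreover have "U = set_tree l" "U' = set_tree l'" using x y xv yv by (auto simp: Q3_def[OF fin c2] TS_def)
      ultimately show "x = y" using xv yv by simp
    qed
    have "(\<Sum>t\<in>A3 S b. [:0,1:] ^ min_count t) = (\<Sum>(U, l, r)\<in>Q3 S b. [:0,1:] ^ min_count (Node l ?m r))"
      unfolding A3_def[OF fin c2] by (subst sum.reindex[OF inj]) (simp add: case_prod_unfold)
    also have "\<dots> = (\<Sum>(U, l, r)\<in>Q3 S b. [:0,1:] * ([:0,1:] ^ min_count l * [:0,1:] ^ min_count r))"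
    proof (rule sum.cong[OF refl], clarify)
      fix U l r assume q: "(U, l, r) \<in> Q3 S b"
      hence U: "U \<subseteq> S - {?m, ?M}" "l \<in> TS U b" "r \<in> TS (S - {?m} - U) (b \<noteq> even (card U))"
        by (auto simp: Q3_def[OF fin c2])
      have L: "distinct (inorder l)" "set_tree l = U" and R: "distinct (inorder r)" "set_tree r = S - {?m} - U"
        using U TS_elt by auto
      have st: "set_tree (Node l ?m r) = S" using L R mS U by auto
      have "?M \<in> set_tree r" using R U MS mM by auto
      hence "r \<noteq> Leaf" by (cases r) auto
      hence "is_inner (Node l ?m r)" by (simp add: is_inner_def)
      moreover have "is_min_node (Node l ?m r)" using st by (simp add: is_min_node_def Min_S)
      moreover have "distinct (inorder (Node l ?m r))" using L R U by auto
      ultimately have "min_count (Node l ?m r) = Suc (min_count l + min_count r)" using min_count_Node by simp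
      thus "[:0,1:] ^ min_count (Node l ?m r) = [:0,1:] * ([:0,1:] ^ min_count l * [:0,1:] ^ min_count r)"
        by (simp add: power_add)
    qed
    also have "\<dots> = [:0,1:] * (\<Sum>U\<in>{U \<in> Pow (S - {?m, ?M}). U \<noteq> {}}. \<Sum>(l, r)\<in>TS U b \<times> TS (S - {?m} - U) (b \<noteq> even (card U)).
          [:0,1:] ^ min_count l * [:0,1:] ^ min_count r)"
      unfolding Q3_def[OF fin c2] sum_distrib_left
      by (subst sum.Sigma[symmetric]) (use fin mS in \<open>auto simp: case_prod_unfold intro!: finite_cartesian_product subfin\<close>)
    also have "\<dots> = [:0,1:] * (\<Sum>U\<in>{U \<in> Pow (S - {?m, ?M}). U \<noteq> {}}. TP U b * TP (S - {?m} - U) (b \<noteq> even (card U)))"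
      unfolding TP_def sum_product sum.cartesian_product by (simp add: case_prod_unfold)
    finally show ?thesis .
  qed
  have "finite (TS S b)" using dec fA1 fA2 fA3 by simp
  moreover have "TP S b = (\<Sum>t\<in>A1 S b. [:0,1:] ^ min_count t) + (\<Sum>t\<in>A2 S b. [:0,1:] ^ min_count t) + (\<Sum>t\<in>A3 S b. [:0,1:] ^ min_count t)"
    unfolding TP_def dec using fA1 fA2 fA3 d12 d3 by (simp add: sum.union_disjoint)
  ultimately show ?thesis using s1 s2 s3 by simp
qed

end


lemma TS_empty: "TS {} b = {Leaf}"
  by (auto simp: TS_def)

lemma TS_single: "TS {a} b = {Node Leaf a Leaf}"
proof (intro set_eqI iffI)
  fix t assume t: "t \<in> TS {a} b"
  hence T: "distinct (inorder t)" "set_tree t = {a}" by (auto simp: TS_def)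
  then obtain l x r where tv: "t = Node l x r" by (cases t) auto
  have Tv: "insert x (set_tree l \<union> set_tree r) = {a}" "x \<notin> set_tree l" "x \<notin> set_tree r" using T tv by auto
  have xa: "x = a" using Tv by blast
  have sl: "set_tree l = {}" using Tv by blast
  have sr: "set_tree r = {}" using Tv by blast
  have "l = Leaf" using sl by (cases l) auto
  moreover have "r = Leaf" using sr by (cases r) auto
  ultimately show "t \<in> {Node Leaf a Leaf}" using tv xa by simp
next
  fix t assume "t \<in> {Node Leaf a Leaf}"
  hence tv: "t = Node Leaf a Leaf" by simp
  have "rok t" using tv by (simp add: rok_def is_min_node_def is_inner_def)
  moreover have "tmin t" using tv by (simp add: tmin_def)
  moreover have "good b t" using tv by (simp add: one_child_def)
  ultimately show "t \<in> TS {a} b" using tv by (simp add: TS_def nodes_Node)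
qed

lemma TP_card: "finite S \<Longrightarrow> finite (TS S b) \<and> TP S b = GP (card S) b"
proof (induction "card S" arbitrary: S b rule: less_induct)
  case less
  show ?case
  proof (cases "card S")
    case 0
    hence "S = {}" using less.prems by simp
    thus ?thesis by (simp add: TS_empty TP_def min_count_Leaf)
  next
    case (Suc k0)
    show ?thesis
    proof (cases k0)
      case 0
      then obtain a where Sa: "S = {a}" using Suc card_1_singletonE by auto
      have "min_count (Node Leaf a Leaf) = 0"
        using min_count_Node[of Leaf a Leaf] by (simp add: min_count_Leaf is_inner_def)
      thus ?thesis using Sa by (simp add: TS_single TP_def)
    next
      case (Suc k)
      have cS: "card S = Suc (Suc k)" using Suc \<open>card S = Suc k0\<close> by simp
      have fin: "finite S" and c2: "card S \<ge> 2" using less.prems cS by auto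
      have IH: "\<And>T c. T \<subseteq> S \<Longrightarrow> T \<noteq> S \<Longrightarrow> finite (TS T c) \<and> TP T c = GP (card T) c"
      proof -
        fix T c assume "T \<subseteq> S" "T \<noteq> S"
        hence "card T < card S" "finite T" using fin by (auto intro: psubset_card_mono finite_subset)
        thus "finite (TS T c) \<and> TP T c = GP (card T) c" using less.hyps by blast
      qed
      let ?m = "mm S" and ?M = "MM S"
      have mS: "?m \<in> S" and MS: "?M \<in> S" and mM: "?m < ?M" using mS MS mM fin c2 by auto
      have R: "finite (TS S b) \<and> TP S b = TP (S - {?M}) (\<not> b) + (if b then [:0,1:] * TP (S - {?m}) False else 0)
         + [:0,1:] * (\<Sum>U\<in>{U \<in> Pow (S - {?m, ?M}). U \<noteq> {}}. TP U b * TP (S - {?m} - U) (b \<noteq> even (card U)))"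
        using TP_rec[OF fin c2] IH by blast
      have c1: "card (S - {?M}) = Suc k" "card (S - {?m}) = Suc k" using cS mS MS fin by auto
      have t1: "TP (S - {?M}) (\<not> b) = GP (Suc k) (\<not> b)" using IH[of "S - {?M}"] MS c1 by auto
      have t2: "TP (S - {?m}) False = GP (Suc k) False" using IH[of "S - {?m}"] mS c1 by auto
      define A where "A = S - {?m, ?M}"
      have fA: "finite A" using fin by (simp add: A_def)
      have cA: "card A = k" using cS mS MS mM fin by (simp add: A_def card_Diff_subset)
      let ?h = "\<lambda>j. if j = 0 then 0 else GP j b * GP (Suc k - j) (b \<noteq> even j)"
      have "(\<Sum>U\<in>{U \<in> Pow A. U \<noteq> {}}. TP U b * TP (S - {?m} - U) (b \<noteq> even (card U)))
          = (\<Sum>U\<in>Pow A. ?h (card U))"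
      proof -
        have "(\<Sum>U\<in>{U \<in> Pow A. U \<noteq> {}}. TP U b * TP (S - {?m} - U) (b \<noteq> even (card U)))
            = (\<Sum>U\<in>{U \<in> Pow A. U \<noteq> {}}. ?h (card U))"
        proof (rule sum.cong[OF refl])
          fix U assume U: "U \<in> {U \<in> Pow A. U \<noteq> {}}"
          have fU: "finite U" using U fA finite_subset by auto
          have UA: "U \<subseteq> A" using U by auto
          have cU: "card U \<le> k" "card U \<noteq> 0" using U fA cA card_mono fU by auto
          have "TP U b = GP (card U) b" using IH[of U] UA mS by (auto simp: A_def)
          moreover have "card (S - {?m} - U) = Suc k - card U"
          proof -
            have "U \<subseteq> S - {?m}" using UA by (auto simp: A_def)
            hence "card (S - {?m} - U) = card (S - {?m}) - card U" using fin fU by (simp add: card_Diff_subset)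
            thus ?thesis using c1 by simp
          qed
          moreover have "TP (S - {?m} - U) (b \<noteq> even (card U)) = GP (card (S - {?m} - U)) (b \<noteq> even (card U))"
            using IH[of "S - {?m} - U"] mS by auto
          ultimately show "TP U b * TP (S - {?m} - U) (b \<noteq> even (card U)) = ?h (card U)" using cU by simp
        qed
        also have "\<dots> = (\<Sum>U\<in>Pow A. ?h (card U))"
          by (rule sum.mono_neutral_left) (use fA in auto)
        finally show ?thesis .
      qed
      also have "\<dots> = (\<Sum>j\<le>k. of_nat (k choose j) * ?h j)" using sum_pow_card[OF fA] cA by simp
      also have "\<dots> = (\<Sum>j\<in>{1..k}. of_nat (k choose j) * GP j b * GP (Suc k - j) (b \<noteq> even j))"
      proof -
        have "{..k} = insert 0 {1..k}" by auto
        hence "(\<Sum>j\<le>k. of_nat (k choose j) * ?h j) = (\<Sum>j\<in>{1..k}. of_nat (k choose j) * ?h j)" by simp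
        also have "\<dots> = (\<Sum>j\<in>{1..k}. of_nat (k choose j) * GP j b * GP (Suc k - j) (b \<noteq> even j))"
          by (rule sum.cong) (auto simp: mult.assoc)
        finally show ?thesis .
      qed
      finally have t3: "(\<Sum>U\<in>{U \<in> Pow (S - {?m, ?M}). U \<noteq> {}}. TP U b * TP (S - {?m} - U) (b \<noteq> even (card U)))
          = (\<Sum>j\<in>{1..k}. of_nat (k choose j) * GP j b * GP (Suc k - j) (b \<noteq> even j))" by (simp add: A_def)
      show ?thesis using R t1 t2 t3 cS by simp
    qed
  qed
qed

theorem mainTheorem7:
  fixes n :: nat
  assumes "n \<ge> 2"
  shows "M n = 2 * (\<Sum>T\<in>HR_tilde n. [:0, 1:] ^ (min_count T + 1))"
proof -
  have "M n = 2 * ([:0,1:] * GP n False)" using final_alg[OF assms d_coeff[OF assms]] .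
  also have "GP n False = TP {1..n} False" using TP_card[of "{1..n}" False] by simp
  also have "[:0,1:] * TP {1..n} False = (\<Sum>T\<in>HR_tilde n. [:0, 1:] ^ (min_count T + 1))"
    unfolding TP_def HR_tilde_TS sum_distrib_left by simp
  finally show ?thesis .
qed


end
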